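(* Let $\nu \in (0,1)$ and $\lambda,\kappa>0$ be such that $6\kappa+\lambda<\nu$. Then there is a subspace $\mathcal{C}\subset(\mathbb{C}^2)^{\otimes n}$ spanned by descendant states $\{S_-^r|\Psi\rangle\}_r$ with magnetizations $r$ pairwise differing by at least $2$ such that $\mathcal{C}$ is an $(\epsilon,\delta)[[n,k,d]]$-AQEDC with parameters \[ k=\kappa \log_2 n,\qquad d=n^{1-\nu},\qquad \epsilon =\Theta(n^{-(\nu-(6\kappa+\lambda))}),\qquad \delta=n^{-\lambda}. \]
   Context: On $n$ qubits, let $\omega=e^{2\pi i/n}$, $\sigma_m^-=|0\rangle\langle1|$ on qubit $m$, $S_-=\sum_{m=1}^n\sigma^-_m$, and $|\Psi\rangle=\overline{\omega}\sum_{m=1}^n\omega^m\sigma_m^-|1\rangle^{\otimes n}$ (the one-magnon, momentum-$2\pi/n$ low-energy eigenstate of the periodic Heisenberg XXX chain $H=-\frac14\sum_m(\sigma^x_m\sigma^x_{m+1}+\sigma^y_m\sigma^y_{m+1}+\sigma^z_m\sigma^z_{m+1})$); its descendants $S_-^r|\Psi\rangle$, $r=0,\dots,n-2$, have magnetization indexed by $r$. A $d$-local operator acts as $F_S\otimes I$ on some set $S$ of $d$ (not necessarily contiguous) qubits. A subspace $\mathcal{C}$ with projection $P$ is an $(\epsilon,\delta)$-approximate error-detection code for a CPTP map $\mathcal{N}$ if for every unit $|\Phi\rangle\in\mathcal{C}$ with $\mathrm{tr}(P\mathcal{N}(|\Phi\rangle\langle\Phi|))\ge\delta$ one has $\langle\Phi|\rho_{\mathcal{N},P}|\Phi\rangle\ge1-\epsilon$,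 where $\rho_{\mathcal{N},P}=\mathrm{tr}(P\mathcal{N}(|\Phi\rangle\langle\Phi|))^{-1}P\mathcal{N}(|\Phi\rangle\langle\Phi|)P$. An $(\epsilon,\delta)[[n,k,d]]$-AQEDC is a $2^k$-dimensional subspace that is an $(\epsilon,\delta)$-approximate error-detection code for every CPTP map $\mathcal{N}(\rho)=\sum_jp_jF_j\rho F_j^\dagger$ with each $F_j$ $d$-local, $\|F_j\|\le1$, and $\{p_j\}$ a probability distribution. *)

theory Defs
  imports "HOL-Analysis.Analysis" "HOL-Library.Landau_Symbols"
begin

text \<open>n-qubit states: the computational basis of (C^2)^{\<otimes> n} is indexed by the set
 of qubits (numbered 0..n-1) that are in state |1>.  Vectors are functions on these sets,
 operators are matrices indexed by pairs of such sets; only values on cfg n matter.\<close>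

type_synonym qvec = "nat set \<Rightarrow> complex"
type_synonym qop = "nat set \<Rightarrow> nat set \<Rightarrow> complex"

definition cfg :: "nat \<Rightarrow> nat set set" where
  "cfg n = Pow {..<n}"

definition app :: "nat \<Rightarrow> qop \<Rightarrow> qvec \<Rightarrow> qvec" where
  "app n A v = (\<lambda>x. \<Sum>y\<in>cfg n. A x y * v y)"

definition inner_q :: "nat \<Rightarrow> qvec \<Rightarrow> qvec \<Rightarrow> complex" where
  "inner_q n u v = (\<Sum>x\<in>cfg n. cnj (u x) * v x)"

definition vnorm :: "nat \<Rightarrow> qvec \<Rightarrow> real" where
  "vnorm n v = sqrt (\<Sum>x\<in>cfg n. (cmod (v x))\<^sup>2)"

definition mult_q :: "nat \<Rightarrow> qop \<Rightarrow> qop \<Rightarrow> qop" where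
  "mult_q n A B = (\<lambda>x z. \<Sum>y\<in>cfg n. A x y * B y z)"

definition adj_q :: "qop \<Rightarrow> qop" where
  "adj_q A = (\<lambda>x y. cnj (A y x))"

definition id_q :: qop where
  "id_q = (\<lambda>x y. if x = y then 1 else 0)"

definition trace_q :: "nat \<Rightarrow> qop \<Rightarrow> complex" where
  "trace_q n A = (\<Sum>x\<in>cfg n. A x x)"

definition ketbra :: "qvec \<Rightarrow> qvec \<Rightarrow> qop" where
  "ketbra u v = (\<lambda>x y. u x * cnj (v y))"

definition op_norm :: "nat \<Rightarrow> qop \<Rightarrow> real" where
  "op_norm n A = Sup {vnorm n (app n A v) | v. vnorm n v = 1}"

text \<open>A acts as F_S \<otimes> I for some set S of exactly d qubits.\<close>
definition local_op :: "nat \<Rightarrow> nat \<Rightarrow> qop \<Rightarrow> bool" where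
  "local_op n d A \<longleftrightarrow> (\<exists>S G. S \<subseteq> {..<n} \<and> card S = d \<and>
     (\<forall>x\<in>cfg n. \<forall>y\<in>cfg n.
        A x y = (if x - S = y - S then G (x \<inter> S) (y \<inter> S) else 0)))"

definition channel :: "nat \<Rightarrow> nat \<Rightarrow> (nat \<Rightarrow> real) \<Rightarrow> (nat \<Rightarrow> qop) \<Rightarrow> qop \<Rightarrow> qop" where
  "channel n m p K \<rho> =
     (\<lambda>x y. \<Sum>j<m. complex_of_real (p j) * mult_q n (mult_q n (K j) \<rho>) (adj_q (K j)) x y)"

definition admissible_noise :: "nat \<Rightarrow> nat \<Rightarrow> nat \<Rightarrow> (nat \<Rightarrow> real) \<Rightarrow> (nat \<Rightarrow> qop) \<Rightarrow> bool" where
  "admissible_noise n d m p K \<longleftrightarrow>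
     (\<forall>j<m. p j \<ge> 0) \<and> (\<Sum>j<m. p j) = 1 \<and>
     (\<forall>j<m. local_op n d (K j) \<and> op_norm n (K j) \<le> 1) \<and>
     (\<forall>x\<in>cfg n. \<forall>y\<in>cfg n.
        (\<Sum>j<m. complex_of_real (p j) * mult_q n (adj_q (K j)) (K j) x y) = id_q x y)"

definition approx_detect ::
  "nat \<Rightarrow> real \<Rightarrow> real \<Rightarrow> qvec set \<Rightarrow> qop \<Rightarrow> (qop \<Rightarrow> qop) \<Rightarrow> bool" where
  "approx_detect n eps delta C P N \<longleftrightarrow>
     (\<forall>\<Phi>\<in>C. vnorm n \<Phi> = 1 \<longrightarrow>
        (let t = Re (trace_q n (mult_q n P (N (ketbra \<Phi> \<Phi>))));
             \<rho> = (\<lambda>x y. mult_q n (mult_q n P (N (ketbra \<Phi> \<Phi>))) P x y / complex_of_real t)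
         in t \<ge> delta \<longrightarrow> Re (inner_q n \<Phi> (app n \<rho> \<Phi>)) \<ge> 1 - eps))"

definition AQEDC :: "nat \<Rightarrow> real \<Rightarrow> real \<Rightarrow> nat \<Rightarrow> nat \<Rightarrow> qvec set \<Rightarrow> bool" where
  "AQEDC n eps delta k d C \<longleftrightarrow>
     (\<exists>b :: nat \<Rightarrow> qvec.
        (\<forall>i<2^k. \<forall>x. x \<notin> cfg n \<longrightarrow> b i x = 0) \<and>
        (\<forall>i<2^k. \<forall>j<2^k. inner_q n (b i) (b j) = (if i = j then 1 else 0)) \<and>
        C = {v. \<exists>c. v = (\<lambda>x. \<Sum>i<2^k. c i * b i x)} \<and>
        (let P = (\<lambda>x y. \<Sum>i<2^k. ketbra (b i) (b i) x y) in
         \<forall>m p K. admissible_noise n d m p K \<longrightarrow> approx_detect n eps delta C P (channel n m p K)))"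

text \<open>Spin operators and the magnon state.  Qubit m (0-based) is qubit m+1 of the paper.\<close>
definition sigma_minus :: "nat \<Rightarrow> qop" where
  "sigma_minus m = (\<lambda>x y. if m \<in> y \<and> x = y - {m} then 1 else 0)"

definition S_minus :: "nat \<Rightarrow> qop" where
  "S_minus n = (\<lambda>x y. \<Sum>m<n. sigma_minus m x y)"

definition all_ones :: "nat \<Rightarrow> qvec" where
  "all_ones n = (\<lambda>x. if x = {..<n} then 1 else 0)"

definition omega :: "nat \<Rightarrow> complex" where
  "omega n = exp (2 * pi * \<i> / of_nat n)"

definition Psi :: "nat \<Rightarrow> qvec" where
  "Psi n = (\<lambda>x. cnj (omega n) *
      (\<Sum>m<n. omega n ^ (m + 1) * app n (sigma_minus m) (all_ones n) x))"

definition descendant :: "nat \<Rightarrow> nat \<Rightarrow> qvec" where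
  "descendant n r = (app n (S_minus n) ^^ r) (Psi n)"

definition desc_span :: "nat \<Rightarrow> nat set \<Rightarrow> qvec set" where
  "desc_span n R = {v. \<exists>c. v = (\<lambda>x. \<Sum>r\<in>R. c r * descendant n r x)}"

end

theory Submission
  imports Defs
begin

lemma finite_cfg[simp]: "finite (cfg n)"
  by (simp add: cfg_def)

lemma cfg_iff: "x \<in> cfg n \<longleftrightarrow> x \<subseteq> {..<n}"
  by (simp add: cfg_def)

definition nsq :: "nat \<Rightarrow> qvec \<Rightarrow> real" where
  "nsq n v = (\<Sum>x\<in>cfg n. (cmod (v x))\<^sup>2)"

lemma nsq_nonneg: "nsq n v \<ge> 0"
  unfolding nsq_def by (intro sum_nonneg) simp

lemma vnorm_nsq: "vnorm n v = sqrt (nsq n v)"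
  by (simp add: vnorm_def nsq_def)

lemma vnorm_nonneg: "vnorm n v \<ge> 0"
  by (simp add: vnorm_nsq nsq_nonneg)

lemma vnorm_sq: "(vnorm n v)\<^sup>2 = nsq n v"
  using nsq_nonneg[of n v] by (simp add: vnorm_nsq)

lemma vnorm_L2: "vnorm n v = L2_set (\<lambda>x. cmod (v x)) (cfg n)"
  by (simp add: vnorm_def L2_set_def)

lemma inner_self: "inner_q n v v = complex_of_real (nsq n v)"
proof -
  have "cnj (v x) * v x = complex_of_real ((cmod (v x))\<^sup>2)" for x
    by (metis complex_norm_square mult.commute)
  thus ?thesis unfolding inner_q_def nsq_def of_real_sum by simp
qed

lemma cauchy_schwarz: "cmod (inner_q n u v) \<le> vnorm n u * vnorm n v"
proof -
  have "cmod (inner_q n u v) \<le> (\<Sum>x\<in>cfg n. cmod (cnj (u x) * v x))"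
    unfolding inner_q_def by (rule norm_sum)
  also have "\<dots> = (\<Sum>x\<in>cfg n. \<bar>cmod (u x)\<bar> * \<bar>cmod (v x)\<bar>)"
    by (simp add: norm_mult)
  also have "\<dots> \<le> vnorm n u * vnorm n v"
    unfolding vnorm_L2 by (rule L2_set_mult_ineq)
  finally show ?thesis .
qed

lemma app_scale: "app n A (\<lambda>x. c * v x) = (\<lambda>x. c * app n A v x)"
  unfolding app_def by (auto simp: sum_distrib_left algebra_simps)

lemma nsq_scale: "nsq n (\<lambda>x. c * v x) = (cmod c)\<^sup>2 * nsq n v"
  unfolding nsq_def by (simp add: sum_distrib_left norm_mult power_mult_distrib)

lemma vnorm_scale: "vnorm n (\<lambda>x. c * v x) = cmod c * vnorm n v"
  by (simp add: vnorm_nsq nsq_scale real_sqrt_mult)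

lemma nsq_zero_imp: "nsq n v = 0 \<Longrightarrow> x \<in> cfg n \<Longrightarrow> v x = 0"
  unfolding nsq_def
  by (subst (asm) sum_nonneg_eq_0_iff) auto

lemma app_bound_crude:
  assumes "vnorm n v = 1"
  shows "vnorm n (app n A v) \<le> (\<Sum>x\<in>cfg n. \<Sum>y\<in>cfg n. cmod (A x y))"
proof -
  have vb: "cmod (v y) \<le> 1" if "y \<in> cfg n" for y
  proof -
    have "(cmod (v y))\<^sup>2 \<le> nsq n v"
      unfolding nsq_def using that by (intro member_le_sum) auto
    also have "\<dots> = 1" using assms vnorm_sq[of n v] by simp
    finally show ?thesis by (simp add: power_le_one_iff abs_le_square_iff)
  qed
  have "vnorm n (app n A v) \<le> (\<Sum>x\<in>cfg n. \<bar>cmod (app n A v x)\<bar>)"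
    unfolding vnorm_L2 by (rule L2_set_le_sum_abs)
  also have "\<dots> \<le> (\<Sum>x\<in>cfg n. \<Sum>y\<in>cfg n. cmod (A x y))"
  proof (intro sum_mono)
    fix x assume "x \<in> cfg n"
    have "\<bar>cmod (app n A v x)\<bar> \<le> (\<Sum>y\<in>cfg n. cmod (A x y * v y))"
      unfolding app_def by (simp add: norm_sum)
    also have "\<dots> \<le> (\<Sum>y\<in>cfg n. cmod (A x y))"
      by (intro sum_mono) (auto simp: norm_mult intro: mult_left_le vb)
    finally show "\<bar>cmod (app n A v x)\<bar> \<le> (\<Sum>y\<in>cfg n. cmod (A x y))" .
  qed
  finally show ?thesis .
qed

lemma op_norm_bound: "vnorm n (app n A v) \<le> op_norm n A * vnorm n v"
proof -
  let ?X = "{vnorm n (app n A v) | v. vnorm n v = 1}"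
  have bdd: "bdd_above ?X"
  proof (rule bdd_aboveI)
    fix z assume "z \<in> ?X"
    then obtain w where "z = vnorm n (app n A w)" "vnorm n w = 1" by blast
    thus "z \<le> (\<Sum>x\<in>cfg n. \<Sum>y\<in>cfg n. cmod (A x y))" using app_bound_crude by simp
  qed
  show ?thesis
  proof (cases "vnorm n v = 0")
    case True
    hence "nsq n v = 0" by (simp add: vnorm_nsq)
    hence "app n A v x = 0" for x
      unfolding app_def using nsq_zero_imp by (auto intro!: sum.neutral)
    hence "vnorm n (app n A v) = 0" by (simp add: vnorm_def)
    thus ?thesis using True by simp
  next
    case False
    let ?s = "vnorm n v"
    have s: "?s > 0" using False vnorm_nonneg[of n v] by linarith
    let ?w = "\<lambda>x. complex_of_real (1 / ?s) * v x"
    have "vnorm n ?w = 1" using s by (simp only: vnorm_scale norm_of_real) simp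
    hence "vnorm n (app n A ?w) \<in> ?X" by blast
    hence le: "vnorm n (app n A ?w) \<le> op_norm n A"
      unfolding op_norm_def using bdd by (rule cSup_upper)
    have eq: "vnorm n (app n A ?w) = vnorm n (app n A v) / ?s"
      using s by (simp only: app_scale vnorm_scale norm_of_real) simp
    have "vnorm n (app n A v) = ?s * vnorm n (app n A ?w)" using s eq by simp
    also have "\<dots> \<le> ?s * op_norm n A" using le s by (intro mult_left_mono) auto
    finally show ?thesis by (simp add: mult.commute)
  qed
qed

lemma inner_op_bound:
  "cmod (inner_q n u (app n A v)) \<le> vnorm n u * (op_norm n A * vnorm n v)"
  by (rule order_trans[OF cauchy_schwarz]) (simp add: mult_left_mono vnorm_nonneg op_norm_bound)

lemma inner_add_right: "inner_q n u (\<lambda>x. f x + g x) = inner_q n u f + inner_q n u g"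
  unfolding inner_q_def by (simp add: distrib_left sum.distrib)

lemma inner_add_left: "inner_q n (\<lambda>x. f x + g x) v = inner_q n f v + inner_q n g v"
  unfolding inner_q_def by (simp add: distrib_right sum.distrib)

lemma app_add: "app n A (\<lambda>x. f x + g x) = (\<lambda>x. app n A f x + app n A g x)"
  unfolding app_def by (simp add: distrib_left sum.distrib)

definition keep :: "nat set \<Rightarrow> qvec \<Rightarrow> qvec" where
  "keep S u = (\<lambda>x. if S \<subseteq> x then u x else 0)"

definition cutv :: "nat set \<Rightarrow> qvec \<Rightarrow> qvec" where
  "cutv S u = (\<lambda>x. if S \<subseteq> x then 0 else u x)"

lemma keep_T: "S \<subseteq> x \<Longrightarrow> keep S u x = u x"
  by (simp add: keep_def)

lemma keep_F: "\<not> S \<subseteq> x \<Longrightarrow> keep S u x = 0"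
  by (simp add: keep_def)

lemma keep_cut: "u = (\<lambda>x. keep S u x + cutv S u x)"
  by (auto simp: keep_def cutv_def)

lemma nsq_mono: "(\<And>x. x \<in> cfg n \<Longrightarrow> cmod (u x) \<le> cmod (v x)) \<Longrightarrow> nsq n u \<le> nsq n v"
  unfolding nsq_def by (intro sum_mono power_mono) auto

lemma vnorm_mono: "(\<And>x. x \<in> cfg n \<Longrightarrow> cmod (u x) \<le> cmod (v x)) \<Longrightarrow> vnorm n u \<le> vnorm n v"
  unfolding vnorm_nsq by (intro real_sqrt_le_mono nsq_mono)

lemma vnorm_keep: "vnorm n (keep S u) \<le> vnorm n u"
  by (intro vnorm_mono) (auto simp: keep_def)

lemma inner_keep_cut: "inner_q n u v = inner_q n (keep S u) (keep S v) + inner_q n (cutv S u) (cutv S v)"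
  unfolding inner_q_def by (auto simp: keep_def cutv_def sum.distrib[symmetric] intro!: sum.cong)

lemma vnorm_ind: "vnorm n (\<lambda>x. if x = {..<n} then (1::complex) else 0) = 1"
proof -
  have U: "{..<n} \<in> cfg n" by (simp add: cfg_iff)
  have "(\<lambda>x. (cmod (if x = {..<n} then (1::complex) else 0))\<^sup>2) = (\<lambda>x. if x = {..<n} then 1 else 0)"
    by auto
  hence "nsq n (\<lambda>x. if x = {..<n} then (1::complex) else 0) = 1"
    unfolding nsq_def by (simp only: \<open>(\<lambda>x. _) = _\<close>) (simp add: U)
  thus ?thesis by (simp add: vnorm_nsq)
qed

lemma op_norm_nonneg: "op_norm n K \<ge> 0"
  using op_norm_bound[of n K "\<lambda>x. if x = {..<n} then (1::complex) else 0"] vnorm_ind[of n]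
    vnorm_nonneg[of n "app n K (\<lambda>x. if x = {..<n} then (1::complex) else 0)"]
  by simp

lemma mu_bound:
  assumes "op_norm n K \<le> 1"
  shows "cmod (K {..<n} {..<n}) \<le> 1"
proof -
  let ?e = "\<lambda>x. if x = {..<n} then (1::complex) else 0"
  have U: "{..<n} \<in> cfg n" by (simp add: cfg_iff)
  have ne: "vnorm n ?e = 1" by (rule vnorm_ind)
  have "app n K ?e = (\<lambda>x. K x {..<n})"
  proof
    fix x
    have "(\<lambda>y. K x y * ?e y) = (\<lambda>y. if y = {..<n} then K x y else 0)" by auto
    thus "app n K ?e x = K x {..<n}" unfolding app_def by (simp only:) (simp add: U)
  qed
  moreover have "inner_q n ?e (\<lambda>x. K x {..<n}) = K {..<n} {..<n}"
  proof -
    have "(\<lambda>x. cnj (?e x) * K x {..<n}) = (\<lambda>x. if x = {..<n} then K x {..<n} else 0)" by auto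
    thus ?thesis unfolding inner_q_def by (simp only:) (simp add: U)
  qed
  ultimately have "cmod (K {..<n} {..<n}) \<le> vnorm n ?e * (op_norm n K * vnorm n ?e)"
    using inner_op_bound[of n ?e K ?e] by simp
  thus ?thesis using ne assms by simp
qed

lemma local_keep:
  assumes S: "S \<subseteq> {..<n}"
    and G: "\<forall>x\<in>cfg n. \<forall>y\<in>cfg n. K x y = (if x - S = y - S then G (x \<inter> S) (y \<inter> S) else 0)"
  shows "inner_q n (keep S u) (app n K (keep S v)) = K {..<n} {..<n} * inner_q n (keep S u) (keep S v)"
proof -
  have U: "{..<n} \<in> cfg n" by (simp add: cfg_iff)
  have KU: "K {..<n} {..<n} = G S S" using G U S by (simp add: Int_absorb1)
  have row: "app n K (keep S v) x = G S S * v x" if x: "x \<in> cfg n" "S \<subseteq> x" for x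
  proof -
    have "app n K (keep S v) x = (\<Sum>y\<in>cfg n. if y = x then G S S * v x else 0)"
      unfolding app_def
    proof (intro sum.cong refl)
      fix y assume y: "y \<in> cfg n"
      show "K x y * keep S v y = (if y = x then G S S * v x else 0)"
      proof (cases "S \<subseteq> y")
        case True
        have "x - S = y - S \<longleftrightarrow> x = y" using True x by blast
        moreover have "x \<inter> S = S" using x by blast
        ultimately show ?thesis using G x y True by (auto simp: keep_def)
      qed (use x in \<open>auto simp: keep_def\<close>)
    qed
    also have "\<dots> = G S S * v x" using x by (simp add: sum.delta)
    finally show ?thesis .
  qed
  show ?thesis
    unfolding inner_q_def KU sum_distrib_left
  proof (intro sum.cong refl)
    fix x assume x: "x \<in> cfg n"
    show "cnj (keep S u x) * app n K (keep S v) x = G S S * (cnj (keep S u x) * keep S v x)"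
    proof (cases "S \<subseteq> x")
      case True
      thus ?thesis using row[OF x True] by (simp add: keep_T)
    qed (simp add: keep_F)
  qed
qed

lemma core:
  assumes loc: "local_op n d K" and opn: "op_norm n K \<le> 1"
    and un: "vnorm n u \<le> 1" and vn: "vnorm n v \<le> 1"
    and ue: "\<And>S. S \<subseteq> {..<n} \<Longrightarrow> card S = d \<Longrightarrow> vnorm n (cutv S u) \<le> e"
    and ve: "\<And>S. S \<subseteq> {..<n} \<Longrightarrow> card S = d \<Longrightarrow> vnorm n (cutv S v) \<le> e"
  shows "cmod (inner_q n u (app n K v) - K {..<n} {..<n} * inner_q n u v) \<le> 2 * e + e\<^sup>2"
proof -
  obtain S G where S: "S \<subseteq> {..<n}" "card S = d"
    and G: "\<forall>x\<in>cfg n. \<forall>y\<in>cfg n. K x y = (if x - S = y - S then G (x \<inter> S) (y \<inter> S) else 0)"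
  proof -
    from loc[unfolded local_op_def] obtain S G where
      "S \<subseteq> {..<n} \<and> card S = d \<and> (\<forall>x\<in>cfg n. \<forall>y\<in>cfg n. K x y = (if x - S = y - S then G (x \<inter> S) (y \<inter> S) else 0))"
      by (elim exE)
    thus ?thesis using that by (elim conjE)
  qed
  let ?mu = "K {..<n} {..<n}"
  let ?ku = "keep S u" and ?kv = "keep S v" and ?cu = "cutv S u" and ?cv = "cutv S v"
  have cu: "vnorm n ?cu \<le> e" by (rule ue[OF S])
  have cv: "vnorm n ?cv \<le> e" by (rule ve[OF S])
  have e0: "e \<ge> 0" using cu vnorm_nonneg[of n ?cu] by linarith
  have kv: "vnorm n ?kv \<le> 1" using vnorm_keep[of n S v] vn by linarith
  have "inner_q n u (app n K v) = inner_q n u (app n K ?kv) + inner_q n u (app n K ?cv)"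
  proof -
    have "app n K v = (\<lambda>x. app n K ?kv x + app n K ?cv x)"
      by (simp add: app_add[symmetric] keep_cut[symmetric])
    thus ?thesis by (simp add: inner_add_right)
  qed
  also have "inner_q n u (app n K ?kv) = inner_q n ?ku (app n K ?kv) + inner_q n ?cu (app n K ?kv)"
    by (simp add: inner_add_left[symmetric] keep_cut[symmetric])
  also have "inner_q n ?ku (app n K ?kv) = ?mu * inner_q n ?ku ?kv"
    using local_keep[OF S(1) G] .
  finally have eq1: "inner_q n u (app n K v) = ?mu * inner_q n ?ku ?kv + inner_q n ?cu (app n K ?kv) + inner_q n u (app n K ?cv)" .
  have eq2: "inner_q n u v = inner_q n ?ku ?kv + inner_q n ?cu ?cv" by (rule inner_keep_cut)
  have eq3: "inner_q n u (app n K v) - ?mu * inner_q n u v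
      = inner_q n ?cu (app n K ?kv) + inner_q n u (app n K ?cv) - ?mu * inner_q n ?cu ?cv"
    unfolding eq1 eq2 by (simp add: ring_distribs)
  have "cmod (inner_q n ?cu (app n K ?kv) + inner_q n u (app n K ?cv) - ?mu * inner_q n ?cu ?cv) \<le> cmod (inner_q n ?cu (app n K ?kv)) + cmod (inner_q n u (app n K ?cv)) + cmod (?mu * inner_q n ?cu ?cv)"
  proof -
    have t1: "cmod (inner_q n ?cu (app n K ?kv) + inner_q n u (app n K ?cv) - ?mu * inner_q n ?cu ?cv)
       \<le> cmod (inner_q n ?cu (app n K ?kv) + inner_q n u (app n K ?cv)) + cmod (?mu * inner_q n ?cu ?cv)"
      by (rule norm_triangle_ineq4)
    have t2: "cmod (inner_q n ?cu (app n K ?kv) + inner_q n u (app n K ?cv))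
       \<le> cmod (inner_q n ?cu (app n K ?kv)) + cmod (inner_q n u (app n K ?cv))"
      by (rule norm_triangle_ineq)
    show ?thesis using t1 t2 by linarith
  qed
  also have "\<dots> \<le> e + e + e\<^sup>2"
  proof (intro add_mono)
    have "cmod (inner_q n ?cu (app n K ?kv)) \<le> vnorm n ?cu * (op_norm n K * vnorm n ?kv)"
      by (rule inner_op_bound)
    also have "\<dots> \<le> e * 1"
      by (rule mult_mono[OF cu mult_le_one[OF opn vnorm_nonneg kv]])
         (simp_all add: e0 op_norm_nonneg vnorm_nonneg)
    finally show "cmod (inner_q n ?cu (app n K ?kv)) \<le> e" by simp
    have "cmod (inner_q n u (app n K ?cv)) \<le> vnorm n u * (op_norm n K * vnorm n ?cv)"
      by (rule inner_op_bound)
    also have "\<dots> \<le> 1 * (1 * e)"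
      by (rule mult_mono[OF un mult_mono[OF opn cv]])
         (simp_all add: e0 op_norm_nonneg vnorm_nonneg)
    finally show "cmod (inner_q n u (app n K ?cv)) \<le> e" by simp
    have "cmod (?mu * inner_q n ?cu ?cv) \<le> 1 * (e * e)"
      unfolding norm_mult
      by (rule mult_mono[OF mu_bound[OF opn] order_trans[OF cauchy_schwarz mult_mono[OF cu cv]]])
         (simp_all add: e0 vnorm_nonneg)
    thus "cmod (?mu * inner_q n ?cu ?cv) \<le> e\<^sup>2" by (simp add: power2_eq_square)
  qed
  finally show ?thesis unfolding eq3 by simp
qed


definition amp :: "nat \<Rightarrow> nat \<Rightarrow> qvec" where
  "amp n r x = (if x \<subseteq> {..<n} \<and> card x + r + 1 = n
     then fact r * (\<Sum>m\<in>{..<n} - x. omega n ^ m) else 0)"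

lemma omega_norm: "cmod (omega n) = 1"
proof -
  have "2 * pi * \<i> / of_nat n = \<i> * complex_of_real (2 * pi / real n)" by simp
  thus ?thesis unfolding omega_def by (simp only: norm_exp_i_times)
qed

lemma omega_cnj: "cnj (omega n) * omega n = 1"
proof -
  have "cnj (omega n) * omega n = complex_of_real ((cmod (omega n))\<^sup>2)"
    by (metis complex_norm_square mult.commute)
  thus ?thesis by (simp add: omega_norm)
qed

lemma app_sigma_ones: "m < n \<Longrightarrow> app n (sigma_minus m) (all_ones n) x = (if x = {..<n} - {m} then 1 else 0)"
proof -
  assume m: "m < n"
  have U: "{..<n} \<in> cfg n" by (simp add: cfg_iff)
  have "(\<lambda>y. sigma_minus m x y * all_ones n y) = (\<lambda>y. if y = {..<n} then sigma_minus m x {..<n} else 0)"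
    by (auto simp: all_ones_def)
  hence "app n (sigma_minus m) (all_ones n) x = sigma_minus m x {..<n}"
    unfolding app_def by (simp only:) (simp add: U)
  thus ?thesis using m by (simp add: sigma_minus_def)
qed

lemma Psi_amp: "Psi n = amp n 0"
proof
  fix x
  have "Psi n x = (\<Sum>m<n. if x = {..<n} - {m} then omega n ^ m else 0)"
    unfolding Psi_def sum_distrib_left
  proof (intro sum.cong refl)
    fix m assume "m \<in> {..<n}"
    hence m: "m < n" by simp
    have "cnj (omega n) * omega n ^ (m + 1) = omega n ^ m"
      using omega_cnj[of n] by (simp add: power_Suc mult.assoc[symmetric] mult.commute)
    then show "cnj (omega n) * (omega n ^ (m + 1) * app n (sigma_minus m) (all_ones n) x) =
        (if x = {..<n} - {m} then omega n ^ m else 0)"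
      using m by (simp add: app_sigma_ones mult.assoc[symmetric])
  qed
  also have "\<dots> = amp n 0 x"
  proof (cases "\<exists>m0<n. x = {..<n} - {m0}")
    case True
    then obtain m0 where m0: "m0 < n" "x = {..<n} - {m0}" by blast
    have "(\<Sum>m<n. if x = {..<n} - {m} then omega n ^ m else 0) = (\<Sum>m<n. if m = m0 then omega n ^ m else 0)"
    proof (intro sum.cong refl)
      fix m assume "m \<in> {..<n}"
      hence "x = {..<n} - {m} \<longleftrightarrow> m = m0" using m0 by auto
      thus "(if x = {..<n} - {m} then omega n ^ m else 0) = (if m = m0 then omega n ^ m else 0)" by simp
    qed
    also have "\<dots> = omega n ^ m0" using m0 by simp
    also have "\<dots> = amp n 0 x"
    proof -
      have "{..<n} - x = {m0}" using m0 by auto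
      moreover have "card x + 1 = n" using m0 by (simp add: card_Diff_singleton)
      ultimately show ?thesis using m0 by (simp add: amp_def)
    qed
    finally show ?thesis .
  next
    case False
    have "amp n 0 x = 0"
    proof (rule ccontr)
      assume "amp n 0 x \<noteq> 0"
      hence x: "x \<subseteq> {..<n}" "card x + 1 = n" by (auto simp: amp_def split: if_splits)
      have "card ({..<n} - x) = 1" using x by (simp add: card_Diff_subset finite_subset)
      then obtain m0 where "{..<n} - x = {m0}" by (rule card_1_singletonE)
      hence "m0 < n" "x = {..<n} - {m0}" using x by auto
      thus False using False by blast
    qed
    moreover have "(\<Sum>m<n. if x = {..<n} - {m} then omega n ^ m else 0) = 0"
      using False by (intro sum.neutral) auto
    ultimately show ?thesis by simp
  qed
  finally show "Psi n x = amp n 0 x" .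
qed

lemma app_S_minus: "app n (S_minus n) v x = (if x \<subseteq> {..<n} then (\<Sum>m\<in>{..<n} - x. v (insert m x)) else 0)"
proof -
  have "app n (S_minus n) v x = (\<Sum>m<n. \<Sum>y\<in>cfg n. sigma_minus m x y * v y)"
    unfolding app_def S_minus_def sum_distrib_right by (rule sum.swap)
  also have "\<dots> = (\<Sum>m<n. if m \<notin> x \<and> x \<subseteq> {..<n} then v (insert m x) else 0)"
  proof (intro sum.cong refl)
    fix m assume "m \<in> {..<n}"
    hence m: "m < n" by simp
    have "(\<Sum>y\<in>cfg n. sigma_minus m x y * v y) = (\<Sum>y\<in>cfg n. if y = insert m x then (if m \<notin> x then v y else 0) else 0)"
      by (intro sum.cong refl) (auto simp: sigma_minus_def)
    also have "\<dots> = (if insert m x \<in> cfg n then (if m \<notin> x then v (insert m x) else 0) else 0)"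
      by (simp add: sum.delta)
    also have "\<dots> = (if m \<notin> x \<and> x \<subseteq> {..<n} then v (insert m x) else 0)"
      using m by (auto simp: cfg_iff)
    finally show "(\<Sum>y\<in>cfg n. sigma_minus m x y * v y) = (if m \<notin> x \<and> x \<subseteq> {..<n} then v (insert m x) else 0)" .
  qed
  also have "\<dots> = (if x \<subseteq> {..<n} then (\<Sum>m\<in>{..<n} - x. v (insert m x)) else 0)"
  proof (cases "x \<subseteq> {..<n}")
    case True
    have "(\<Sum>m<n. if m \<notin> x \<and> x \<subseteq> {..<n} then v (insert m x) else 0) = (\<Sum>m\<in>{..<n} \<inter> {m. m \<notin> x}. v (insert m x))"
      using True by (simp add: sum.inter_restrict)
    moreover have "{..<n} \<inter> {m. m \<notin> x} = {..<n} - x" by auto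
    ultimately show ?thesis using True by simp
  qed simp
  finally show ?thesis .
qed

lemma amp_step: "app n (S_minus n) (amp n r) = amp n (Suc r)"
proof
  fix x
  show "app n (S_minus n) (amp n r) x = amp n (Suc r) x"
  proof (cases "x \<subseteq> {..<n}")
    case False thus ?thesis by (simp add: app_S_minus amp_def)
  next
    case True
    let ?Z = "{..<n} - x"
    have fx: "finite x" using True finite_subset by blast
    have cZ: "card ?Z = n - card x" using True by (simp add: card_Diff_subset fx)
    have cx: "card x \<le> n" using True by (metis card_lessThan card_mono finite_lessThan)
    have "app n (S_minus n) (amp n r) x = (\<Sum>m\<in>?Z. amp n r (insert m x))"
      using True by (simp add: app_S_minus)
    also have "\<dots> = (\<Sum>m\<in>?Z. if card x + Suc r + 1 = n then fact r * (\<Sum>m'\<in>?Z - {m}. omega n ^ m') else 0)"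
    proof (intro sum.cong refl)
      fix m assume m: "m \<in> ?Z"
      have "insert m x \<subseteq> {..<n}" using m True by auto
      moreover have "card (insert m x) = Suc (card x)" using m fx by simp
      moreover have "{..<n} - insert m x = ?Z - {m}" by auto
      ultimately show "amp n r (insert m x) = (if card x + Suc r + 1 = n then fact r * (\<Sum>m'\<in>?Z - {m}. omega n ^ m') else 0)"
        by (simp add: amp_def)
    qed
    also have "\<dots> = amp n (Suc r) x"
    proof (cases "card x + Suc r + 1 = n")
      case False thus ?thesis by (simp add: amp_def)
    next
      case c: True
      have "(\<Sum>m\<in>?Z. fact r * (\<Sum>m'\<in>?Z - {m}. omega n ^ m')) = (\<Sum>m\<in>?Z. fact r * ((\<Sum>m'\<in>?Z. omega n ^ m') - omega n ^ m))"
        by (intro sum.cong refl) (simp add: sum_diff1)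
      also have "\<dots> = fact r * (of_nat (card ?Z) * (\<Sum>m'\<in>?Z. omega n ^ m') - (\<Sum>m'\<in>?Z. omega n ^ m'))"
        by (simp add: sum_distrib_left[symmetric] sum_subtractf)
      also have "\<dots> = fact r * (of_nat (Suc r) * (\<Sum>m'\<in>?Z. omega n ^ m'))"
      proof -
        have "card ?Z = Suc (Suc r)" using cZ c by simp
        thus ?thesis by (simp add: algebra_simps)
      qed
      also have "\<dots> = fact (Suc r) * (\<Sum>m'\<in>?Z. omega n ^ m')"
        by (simp add: fact_Suc)
      finally show ?thesis using c True by (simp add: amp_def)
    qed
    finally show ?thesis .
  qed
qed

lemma desc_amp: "descendant n r = amp n r"
  by (induction r) (simp_all add: descendant_def Psi_amp amp_step)


lemma omega_pow: "omega n ^ j = exp (2 * complex_of_real pi * \<i> * of_nat j / of_nat n)"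
proof -
  have "omega n ^ j = exp (of_nat j * (2 * pi * \<i> / of_nat n))"
    unfolding omega_def by (rule exp_of_nat_mult[symmetric])
  also have "of_nat j * (2 * pi * \<i> / of_nat n) = 2 * complex_of_real pi * \<i> * of_nat j / of_nat n"
    by simp
  finally show ?thesis .
qed

lemma omega_sum: "n \<ge> 2 \<Longrightarrow> (\<Sum>m<n. omega n ^ m) = 0"
proof -
  assume n: "n \<ge> 2"
  have "omega n ^ 1 \<noteq> 1"
    unfolding omega_pow using n by (subst complex_root_unity_eq_1) auto
  hence ne: "omega n \<noteq> 1" by simp
  have "omega n ^ n = 1"
    unfolding omega_pow using n by (subst complex_root_unity_eq_1) auto
  thus ?thesis using ne by (simp add: geometric_sum)
qed

lemma card_supsets:
  assumes U: "finite U" and A: "A \<subseteq> U" and k: "card A \<le> k"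
  shows "card {Z. Z \<subseteq> U \<and> card Z = k \<and> A \<subseteq> Z} = (card U - card A) choose (k - card A)"
proof -
  have fA: "finite A" using U A finite_subset by blast
  have "bij_betw (\<lambda>Z. Z - A) {Z. Z \<subseteq> U \<and> card Z = k \<and> A \<subseteq> Z} {W. W \<subseteq> U - A \<and> card W = k - card A}"
  proof (rule bij_betw_byWitness[where f' = "\<lambda>W. W \<union> A"])
    show "\<forall>a\<in>{Z. Z \<subseteq> U \<and> card Z = k \<and> A \<subseteq> Z}. a - A \<union> A = a" by auto
    show "\<forall>a'\<in>{W. W \<subseteq> U - A \<and> card W = k - card A}. a' \<union> A - A = a'" by auto
    show "(\<lambda>Z. Z - A) ` {Z. Z \<subseteq> U \<and> card Z = k \<and> A \<subseteq> Z} \<subseteq> {W. W \<subseteq> U - A \<and> card W = k - card A}"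
    proof safe
      fix Z assume "Z \<subseteq> U" "A \<subseteq> Z" "k = card Z"
      thus "card (Z - A) = card Z - card A" using U fA by (simp add: card_Diff_subset finite_subset)
    qed auto
    show "(\<lambda>W. W \<union> A) ` {W. W \<subseteq> U - A \<and> card W = k - card A} \<subseteq> {Z. Z \<subseteq> U \<and> card Z = k \<and> A \<subseteq> Z}"
    proof safe
      fix W assume W: "W \<subseteq> U - A" "card W = k - card A"
      have fW: "finite W" using W U finite_subset by blast
      have "card (W \<union> A) = card W + card A" using W fW fA by (subst card_Un_disjoint) auto
      thus "card (W \<union> A) = k" using W k by simp
    qed (use A in auto)
  qed
  hence "card {Z. Z \<subseteq> U \<and> card Z = k \<and> A \<subseteq> Z} = card {W. W \<subseteq> U - A \<and> card W = k - card A}"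
    by (rule bij_betw_same_card)
  also have "\<dots> = card (U - A) choose (k - card A)" using U by (simp add: n_subsets)
  also have "card (U - A) = card U - card A" using A fA by (simp add: card_Diff_subset)
  finally show ?thesis .
qed

lemma sum_restr: "finite U \<Longrightarrow> Z \<subseteq> U \<Longrightarrow> (\<Sum>x\<in>U. if x \<in> Z then g x else 0) = sum g Z"
  by (subst sum.inter_restrict[symmetric]) (auto simp: Int_absorb1)

lemma pair_count_sum:
  fixes f :: "nat \<Rightarrow> nat \<Rightarrow> complex"
  assumes U: "finite U" and T: "\<And>Z. Z \<in> T \<Longrightarrow> Z \<subseteq> U" and fT: "finite T"
  shows "(\<Sum>Z\<in>T. \<Sum>m\<in>Z. \<Sum>m'\<in>Z. f m m') = (\<Sum>m\<in>U. \<Sum>m'\<in>U. of_nat (card {Z\<in>T. m \<in> Z \<and> m' \<in> Z}) * f m m')"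
proof -
  have "(\<Sum>Z\<in>T. \<Sum>m\<in>Z. \<Sum>m'\<in>Z. f m m') = (\<Sum>Z\<in>T. \<Sum>m\<in>U. \<Sum>m'\<in>U. if m \<in> Z \<and> m' \<in> Z then f m m' else 0)"
  proof (rule sum.cong[OF refl])
    fix Z assume Z: "Z \<in> T"
    have ZU: "U \<inter> Z = Z" using T[OF Z] by blast
    have "(\<Sum>m\<in>U. \<Sum>m'\<in>U. if m \<in> Z \<and> m' \<in> Z then f m m' else 0) = (\<Sum>m\<in>U. if m \<in> Z then (\<Sum>m'\<in>U. if m' \<in> Z then f m m' else 0) else 0)"
      by (intro sum.cong refl) auto
    also have "\<dots> = (\<Sum>m\<in>Z. \<Sum>m'\<in>U. if m' \<in> Z then f m m' else 0)"
      by (rule sum_restr[OF U T[OF Z]])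
    also have "\<dots> = (\<Sum>m\<in>Z. \<Sum>m'\<in>Z. f m m')"
      by (rule sum.cong[OF refl]) (rule sum_restr[OF U T[OF Z]])
    finally show "(\<Sum>m\<in>Z. \<Sum>m'\<in>Z. f m m') = (\<Sum>m\<in>U. \<Sum>m'\<in>U. if m \<in> Z \<and> m' \<in> Z then f m m' else 0)" by simp
  qed
  also have "\<dots> = (\<Sum>m\<in>U. \<Sum>Z\<in>T. \<Sum>m'\<in>U. if m \<in> Z \<and> m' \<in> Z then f m m' else 0)"
    by (rule sum.swap)
  also have "\<dots> = (\<Sum>m\<in>U. \<Sum>m'\<in>U. \<Sum>Z\<in>T. if m \<in> Z \<and> m' \<in> Z then f m m' else 0)"
    by (rule sum.cong[OF refl]) (rule sum.swap)
  also have "\<dots> = (\<Sum>m\<in>U. \<Sum>m'\<in>U. of_nat (card {Z\<in>T. m \<in> Z \<and> m' \<in> Z}) * f m m')"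
  proof (intro sum.cong refl)
    fix m m'
    have "(\<Sum>Z\<in>T. if m \<in> Z \<and> m' \<in> Z then f m m' else 0) = (\<Sum>Z\<in>{Z\<in>T. m \<in> Z \<and> m' \<in> Z}. f m m')"
      by (rule sum.inter_filter[OF fT, symmetric])
    also have "\<dots> = of_nat (card {Z\<in>T. m \<in> Z \<and> m' \<in> Z}) * f m m'" by simp
    finally show "(\<Sum>Z\<in>T. if m \<in> Z \<and> m' \<in> Z then f m m' else 0) = of_nat (card {Z\<in>T. m \<in> Z \<and> m' \<in> Z}) * f m m'" .
  qed
  finally show ?thesis .
qed

lemma count_diag:
  assumes m: "m < n" and r: "r + 1 \<le> n"
  shows "card {Z\<in>{Z. Z \<subseteq> {..<n} \<and> card Z = r + 1}. m \<in> Z \<and> m \<in> Z} = (n - 1) choose r"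
proof -
  have "{Z\<in>{Z. Z \<subseteq> {..<n} \<and> card Z = r + 1}. m \<in> Z \<and> m \<in> Z} = {Z. Z \<subseteq> {..<n} \<and> card Z = r + 1 \<and> {m} \<subseteq> Z}"
    by auto
  also have "card \<dots> = (card {..<n} - card {m}) choose (r + 1 - card {m})"
    using m by (intro card_supsets) auto
  finally show ?thesis by simp
qed

lemma count_off:
  assumes m: "m < n" "m' < n" "m \<noteq> m'" and r: "r + 1 \<le> n"
  shows "card {Z\<in>{Z. Z \<subseteq> {..<n} \<and> card Z = r + 1}. m \<in> Z \<and> m' \<in> Z} = (if r = 0 then 0 else (n - 2) choose (r - 1))"
proof (cases "r = 0")
  case True
  have "{Z\<in>{Z. Z \<subseteq> {..<n} \<and> card Z = r + 1}. m \<in> Z \<and> m' \<in> Z} = {}"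
  proof safe
    fix Z assume Z: "Z \<subseteq> {..<n}" "card Z = r + 1" "m \<in> Z" "m' \<in> Z"
    have "finite Z" using Z finite_subset by blast
    hence "card {m, m'} \<le> card Z" using Z by (intro card_mono) auto
    thus "Z \<in> {}" using Z m True by simp
  qed
  thus ?thesis using True by simp
next
  case False
  have "{Z\<in>{Z. Z \<subseteq> {..<n} \<and> card Z = r + 1}. m \<in> Z \<and> m' \<in> Z} = {Z. Z \<subseteq> {..<n} \<and> card Z = r + 1 \<and> {m, m'} \<subseteq> Z}"
    by auto
  also have "card \<dots> = (card {..<n} - card {m, m'}) choose (r + 1 - card {m, m'})"
    using m False by (intro card_supsets) auto
  finally show ?thesis using m False by (simp add: numeral_2_eq_2)
qed

lemma choose_diff:
  assumes "n \<ge> 2"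
  shows "((n - 1) choose r) = (if r = 0 then 0 else (n - 2) choose (r - 1)) + ((n - 2) choose r)"
proof (cases r)
  case 0 thus ?thesis by simp
next
  case (Suc k)
  have "n - 1 = Suc (n - 2)" using assms by simp
  thus ?thesis using Suc by (simp only: binomial_Suc_Suc) simp
qed

lemma sum_Z_norm:
  assumes n: "n \<ge> 2" and r: "r + 2 \<le> n"
  shows "(\<Sum>Z\<in>{Z. Z \<subseteq> {..<n} \<and> card Z = r + 1}. (cmod (\<Sum>m\<in>Z. omega n ^ m))\<^sup>2) = real n * real ((n - 2) choose r)"
proof -
  let ?T = "{Z. Z \<subseteq> {..<n} \<and> card Z = r + 1}"
  let ?f = "\<lambda>m m'. omega n ^ m * cnj (omega n ^ m')"
  let ?c1 = "(n - 1) choose r" and ?c2 = "if r = 0 then 0 else (n - 2) choose (r - 1)"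
  have fT: "finite ?T" by (rule finite_subset[of _ "Pow {..<n}"]) auto
  have "complex_of_real (\<Sum>Z\<in>?T. (cmod (\<Sum>m\<in>Z. omega n ^ m))\<^sup>2) = (\<Sum>Z\<in>?T. \<Sum>m\<in>Z. \<Sum>m'\<in>Z. ?f m m')"
    unfolding of_real_sum
  proof (rule sum.cong[OF refl])
    fix Z
    show "complex_of_real ((cmod (\<Sum>m\<in>Z. omega n ^ m))\<^sup>2) = (\<Sum>m\<in>Z. \<Sum>m'\<in>Z. ?f m m')"
      by (simp only: complex_norm_square cnj_sum sum_product)
  qed
  also have "\<dots> = (\<Sum>m<n. \<Sum>m'<n. of_nat (card {Z\<in>?T. m \<in> Z \<and> m' \<in> Z}) * ?f m m')"
    by (rule pair_count_sum) (use fT in auto)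
  also have "\<dots> = (\<Sum>m<n. \<Sum>m'<n. (of_nat ?c2 + (if m' = m then of_nat ?c1 - of_nat ?c2 else 0)) * ?f m m')"
  proof (intro sum.cong refl)
    fix m m' assume "m \<in> {..<n}" "m' \<in> {..<n}"
    thus "of_nat (card {Z\<in>?T. m \<in> Z \<and> m' \<in> Z}) * ?f m m' = (of_nat ?c2 + (if m' = m then of_nat ?c1 - of_nat ?c2 else 0)) * ?f m m'"
      using r count_diag[of m n r] count_off[of m n m' r] by auto
  qed
  also have "\<dots> = of_nat ?c2 * (\<Sum>m<n. \<Sum>m'<n. ?f m m') + (of_nat ?c1 - of_nat ?c2) * (\<Sum>m<n. ?f m m)"
    by (simp add: distrib_right sum.distrib sum_distrib_left if_distrib[where f = "\<lambda>z. z * _"] cong: if_cong)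
  also have "(\<Sum>m<n. \<Sum>m'<n. ?f m m') = (\<Sum>m<n. omega n ^ m) * cnj (\<Sum>m<n. omega n ^ m)"
    by (simp only: cnj_sum sum_product)
  also have "\<dots> = 0" using omega_sum[OF n] by simp
  also have "(\<Sum>m<n. ?f m m) = of_nat n"
  proof -
    have "?f m m = 1" for m
      using omega_cnj[of n] by (simp add: power_mult_distrib[symmetric] mult.commute)
    thus ?thesis by simp
  qed
  also have "(of_nat ?c1 - of_nat ?c2 :: complex) = of_nat ((n - 2) choose r)"
    using choose_diff[OF n, of r] by simp
  finally have "complex_of_real (\<Sum>Z\<in>?T. (cmod (\<Sum>m\<in>Z. omega n ^ m))\<^sup>2) = complex_of_real (real n * real ((n - 2) choose r))"
    by simp
  thus ?thesis by (simp only: of_real_eq_iff)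
qed


lemma amp_cmod_sq:
  "x \<in> cfg n \<Longrightarrow> (cmod (amp n r x))\<^sup>2 = (if card x + r + 1 = n then (fact r)\<^sup>2 * (cmod (\<Sum>m\<in>{..<n} - x. omega n ^ m))\<^sup>2 else 0)"
  by (simp add: amp_def cfg_iff norm_mult norm_fact power_mult_distrib)

lemma nsq_amp:
  assumes n: "n \<ge> 2" and r: "r + 2 \<le> n"
  shows "nsq n (amp n r) = (fact r)\<^sup>2 * (real n * real ((n - 2) choose r))"
proof -
  let ?U = "{..<n}"
  let ?X = "{x \<in> cfg n. card x + r + 1 = n}"
  let ?T = "{Z. Z \<subseteq> ?U \<and> card Z = r + 1}"
  let ?g = "\<lambda>Z. (cmod (\<Sum>m\<in>Z. omega n ^ m))\<^sup>2"
  have "nsq n (amp n r) = (\<Sum>x\<in>cfg n. if card x + r + 1 = n then (fact r)\<^sup>2 * ?g (?U - x) else 0)"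
    unfolding nsq_def by (intro sum.cong refl) (simp add: amp_cmod_sq)
  also have "\<dots> = (\<Sum>x\<in>?X. (fact r)\<^sup>2 * ?g (?U - x))"
    by (rule sum.inter_filter[symmetric]) simp
  also have "\<dots> = (fact r)\<^sup>2 * (\<Sum>x\<in>?X. ?g (?U - x))"
    by (simp add: sum_distrib_left)
  also have "(\<Sum>x\<in>?X. ?g (?U - x)) = sum ?g ?T"
  proof (rule sum.reindex_bij_betw)
    show "bij_betw (\<lambda>x. ?U - x) ?X ?T"
    proof (rule bij_betw_byWitness[where f' = "\<lambda>x. ?U - x"])
      show "\<forall>a\<in>?X. ?U - (?U - a) = a" by (auto simp: cfg_iff)
      show "\<forall>a\<in>?T. ?U - (?U - a) = a" by auto
      show "(\<lambda>x. ?U - x) ` ?X \<subseteq> ?T"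
      proof (rule image_subsetI)
        fix x assume "x \<in> ?X"
        hence x: "x \<in> cfg n" "card x + r + 1 = n" by auto
        have "card (?U - x) = n - card x" using x by (simp add: card_Diff_subset cfg_iff finite_subset)
        hence "card (?U - x) = r + 1" using x by simp
        thus "?U - x \<in> ?T" by auto
      qed
      show "(\<lambda>x. ?U - x) ` ?T \<subseteq> ?X"
      proof (rule image_subsetI)
        fix Z assume "Z \<in> ?T"
        hence Z: "Z \<subseteq> ?U" "card Z = r + 1" by auto
        have "?U - Z \<in> cfg n" by (simp add: cfg_iff)
        moreover have "card (?U - Z) = n - card Z" using Z by (simp add: card_Diff_subset finite_subset)
        ultimately show "?U - Z \<in> ?X" using Z r by simp
      qed
    qed
  qed
  also have "sum ?g ?T = real n * real ((n - 2) choose r)" by (rule sum_Z_norm[OF n r])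
  finally show ?thesis .
qed

lemma amp_bound:
  "cmod (amp n r x) \<le> fact r * real (r + 1)"
proof (cases "x \<subseteq> {..<n} \<and> card x + r + 1 = n")
  case True
  have "cmod (\<Sum>m\<in>{..<n} - x. omega n ^ m) \<le> (\<Sum>m\<in>{..<n} - x. cmod (omega n ^ m))"
    by (rule norm_sum)
  also have "\<dots> = real (card ({..<n} - x))" by (simp add: norm_power omega_norm)
  also have "card ({..<n} - x) = r + 1"
  proof -
    have "finite x" using True finite_subset by blast
    moreover have "card x + r + 1 = n" using True by blast
    moreover have "card ({..<n} - x) = n - card x" using True \<open>finite x\<close> by (simp add: card_Diff_subset)
    ultimately show ?thesis by linarith
  qed
  finally show ?thesis using True by (simp add: amp_def norm_mult norm_fact mult_left_mono)
qed (auto simp: amp_def)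

lemma amp_out: "x \<notin> cfg n \<Longrightarrow> amp n r x = 0"
  by (simp add: amp_def cfg_iff)

lemma amp_supp: "amp n r x \<noteq> 0 \<Longrightarrow> card x + r + 1 = n"
  by (simp add: amp_def split: if_splits)

lemma count_avoid:
  assumes j: "j < n"
  shows "card {x \<in> cfg n. j \<notin> x \<and> card x + r + 1 = n} \<le> (n - 1) choose r"
proof (cases "r + 1 \<le> n")
  case False
  hence "{x \<in> cfg n. j \<notin> x \<and> card x + r + 1 = n} = {}" by auto
  thus ?thesis by (metis card.empty zero_le)
next
  case True
  have "{x \<in> cfg n. j \<notin> x \<and> card x + r + 1 = n} = {x. x \<subseteq> {..<n} - {j} \<and> card x = (n - 1) - r}"
    using True by (auto simp: cfg_iff)
  also have "card \<dots> = card ({..<n} - {j}) choose ((n - 1) - r)" by (simp add: n_subsets)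
  also have "\<dots> = (n - 1) choose ((n - 1) - r)" using j by simp
  also have "\<dots> = (n - 1) choose r"
  proof -
    have "r \<le> n - 1" using True by simp
    hence "(n - 1) choose r = (n - 1) choose ((n - 1) - r)" by (rule binomial_symmetric)
    thus ?thesis by simp
  qed
  finally show ?thesis by simp
qed

lemma nsq_cut_amp:
  assumes S: "S \<subseteq> {..<n}" "card S = d"
  shows "nsq n (cutv S (amp n r)) \<le> real d * ((fact r * real (r + 1))\<^sup>2 * real ((n - 1) choose r))"
proof -
  let ?a = "\<lambda>x. (cmod (amp n r x))\<^sup>2"
  let ?M = "(fact r * real (r + 1))\<^sup>2"
  have fS: "finite S" using S finite_subset by blast
  have "nsq n (cutv S (amp n r)) = (\<Sum>x\<in>cfg n. if S \<subseteq> x then 0 else ?a x)"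
    unfolding nsq_def cutv_def by (intro sum.cong refl) auto
  also have "\<dots> \<le> (\<Sum>x\<in>cfg n. \<Sum>j\<in>S. if j \<notin> x then ?a x else 0)"
  proof (rule sum_mono)
    fix x
    show "(if S \<subseteq> x then 0 else ?a x) \<le> (\<Sum>j\<in>S. if j \<notin> x then ?a x else 0)"
    proof (cases "S \<subseteq> x")
      case True thus ?thesis by (simp add: sum_nonneg)
    next
      case False
      then obtain j where j: "j \<in> S" "j \<notin> x" by blast
      have "?a x = (if j \<notin> x then ?a x else 0)" using j by simp
      also have "\<dots> \<le> (\<Sum>j\<in>S. if j \<notin> x then ?a x else 0)"
        by (rule member_le_sum[OF j(1)]) (simp_all add: fS)
      finally show ?thesis using False by simp
    qed
  qed
  also have "\<dots> = (\<Sum>j\<in>S. \<Sum>x\<in>cfg n. if j \<notin> x then ?a x else 0)"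
    by (rule sum.swap)
  also have "\<dots> \<le> (\<Sum>j\<in>S. ?M * real ((n - 1) choose r))"
  proof (rule sum_mono)
    fix j assume "j \<in> S"
    hence j: "j < n" using S by auto
    have "(\<Sum>x\<in>cfg n. if j \<notin> x then ?a x else 0) \<le> (\<Sum>x\<in>cfg n. if j \<notin> x \<and> card x + r + 1 = n then ?M else 0)"
    proof (rule sum_mono)
      fix x
      have "?a x \<le> ?M"
        using amp_bound[of n r x] by (intro power_mono) auto
      moreover have "card x + r + 1 \<noteq> n \<Longrightarrow> ?a x = 0" using amp_supp[of n r x] by auto
      ultimately show "(if j \<notin> x then ?a x else 0) \<le> (if j \<notin> x \<and> card x + r + 1 = n then ?M else 0)"
        by auto
    qed
    also have "\<dots> = (\<Sum>x\<in>{x \<in> cfg n. j \<notin> x \<and> card x + r + 1 = n}. ?M)"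
      by (rule sum.inter_filter[symmetric]) simp
    also have "\<dots> = ?M * real (card {x \<in> cfg n. j \<notin> x \<and> card x + r + 1 = n})"
      by simp
    also have "\<dots> \<le> ?M * real ((n - 1) choose r)"
      using count_avoid[OF j, of r] by (intro mult_left_mono) auto
    finally show "(\<Sum>x\<in>cfg n. if j \<notin> x then ?a x else 0) \<le> ?M * real ((n - 1) choose r)" .
  qed
  also have "\<dots> = real d * (?M * real ((n - 1) choose r))" using S by simp
  finally show ?thesis .
qed


lemma mult_ketbra_left: "mult_q n A (ketbra u v) = ketbra (app n A u) v"
  unfolding mult_q_def ketbra_def app_def by (simp add: sum_distrib_right mult.assoc)

lemma mult_ketbra_adj: "mult_q n (ketbra u v) (adj_q B) = ketbra u (app n B v)"
  unfolding mult_q_def ketbra_def app_def adj_q_def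
  by (simp add: sum_distrib_left mult_ac)

lemma mult_ketbra_right: "mult_q n (ketbra u v) B = ketbra u (app n (adj_q B) v)"
  unfolding mult_q_def ketbra_def app_def adj_q_def
  by (simp add: sum_distrib_left mult_ac)

lemma mult_sum_right:
  "mult_q n A (\<lambda>x y. \<Sum>j<m. a j * F j x y) = (\<lambda>x y. \<Sum>j<m. a j * mult_q n A (F j) x y)"
  unfolding mult_q_def
  by (auto simp: sum_distrib_left intro!: ext sum.cong sum.swap[THEN trans] simp: algebra_simps)

lemma mult_sum_left:
  "mult_q n (\<lambda>x y. \<Sum>j<m. a j * F j x y) B = (\<lambda>x y. \<Sum>j<m. a j * mult_q n (F j) B x y)"
  unfolding mult_q_def
  by (auto simp: sum_distrib_left sum_distrib_right intro!: ext sum.cong sum.swap[THEN trans] simp: algebra_simps)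

lemma trace_sum: "trace_q n (\<lambda>x y. \<Sum>j<m. a j * F j x y) = (\<Sum>j<m. a j * trace_q n (F j))"
  unfolding trace_q_def by (simp add: sum_distrib_left sum.swap[of _ "{..<m}"])

lemma trace_ketbra: "trace_q n (ketbra u v) = inner_q n v u"
  unfolding trace_q_def ketbra_def inner_q_def by (simp add: mult.commute)

lemma app_sum_op: "app n (\<lambda>x y. \<Sum>j<m. a j * F j x y) v = (\<lambda>x. \<Sum>j<m. a j * app n (F j) v x)"
  unfolding app_def by (auto simp: sum_distrib_left sum_distrib_right intro!: ext sum.swap[THEN trans] simp: algebra_simps)

lemma app_div: "app n (\<lambda>x y. F x y / c) v = (\<lambda>x. app n F v x / c)"
  unfolding app_def by (simp add: sum_divide_distrib)

lemma inner_sum_right: "inner_q n u (\<lambda>x. \<Sum>j<m. a j * f j x) = (\<Sum>j<m. a j * inner_q n u (f j))"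
  unfolding inner_q_def by (auto simp: sum_distrib_left intro!: sum.swap[THEN trans] simp: algebra_simps)

lemma inner_sum_left: "inner_q n (\<lambda>x. \<Sum>j<m. a j * f j x) v = (\<Sum>j<m. cnj (a j) * inner_q n (f j) v)"
  unfolding inner_q_def by (auto simp: sum_distrib_left sum_distrib_right cnj_sum intro!: sum.swap[THEN trans] simp: algebra_simps)

lemma inner_div_right: "inner_q n u (\<lambda>x. f x / c) = inner_q n u f / c"
  unfolding inner_q_def by (simp add: sum_divide_distrib)

lemma app_ketbra: "app n (ketbra a b) v = (\<lambda>x. a x * inner_q n b v)"
  unfolding app_def ketbra_def inner_q_def by (auto simp: sum_distrib_left algebra_simps)

lemma inner_conj: "inner_q n v u = cnj (inner_q n u v)"
  unfolding inner_q_def by (simp add: cnj_sum mult.commute)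

lemma app_linear: "app n A (\<lambda>x. \<Sum>j<m. a j * f j x) = (\<lambda>x. \<Sum>j<m. a j * app n A (f j) x)"
  unfolding app_def by (auto simp: sum_distrib_left intro!: ext sum.swap[THEN trans] simp: algebra_simps)

lemma inner_scale_left: "inner_q n (\<lambda>x. c * u x) v = cnj c * inner_q n u v"
  unfolding inner_q_def by (simp add: sum_distrib_left algebra_simps)

lemma inner_scale_right: "inner_q n u (\<lambda>x. c * v x) = c * inner_q n u v"
  unfolding inner_q_def by (simp add: sum_distrib_left algebra_simps)

lemma adj_P: "adj_q (\<lambda>x y. \<Sum>i<N. ketbra (b i) (b i) x y) = (\<lambda>x y. \<Sum>i<N. ketbra (b i) (b i) x y)"
  unfolding adj_q_def ketbra_def by (simp add: cnj_sum mult.commute)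

lemma app_P: "app n (\<lambda>x y. \<Sum>i<N. ketbra (b i) (b i) x y) v = (\<lambda>x. \<Sum>i<N. inner_q n (b i) v * b i x)"
proof -
  have "app n (\<lambda>x y. \<Sum>i<N. ketbra (b i) (b i) x y) v = app n (\<lambda>x y. \<Sum>i<N. 1 * ketbra (b i) (b i) x y) v"
    by simp
  also have "\<dots> = (\<lambda>x. \<Sum>i<N. 1 * app n (ketbra (b i) (b i)) v x)" by (rule app_sum_op)
  finally show ?thesis by (simp add: app_ketbra mult.commute)
qed


lemma cmod_sq_complex: "complex_of_real ((cmod z)\<^sup>2) = z * cnj z"
  by (rule complex_norm_square)

lemma cmod_sq_complex': "(complex_of_real (cmod z))\<^sup>2 = z * cnj z"
  by (metis complex_norm_square of_real_power)

lemma proj_ineq: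
  fixes c w :: "nat \<Rightarrow> complex"
  assumes c1: "(\<Sum>i<N. (cmod (c i))\<^sup>2) = 1"
  shows "(\<Sum>i<N. (cmod (w i))\<^sup>2) - (cmod (\<Sum>i<N. w i * cnj (c i)))\<^sup>2 \<le> (\<Sum>i<N. (cmod (w i - \<mu> * c i))\<^sup>2)"
proof -
  let ?a = "\<Sum>i<N. w i * cnj (c i)"
  have cc: "(\<Sum>i<N. c i * cnj (c i)) = 1"
    using arg_cong[OF c1, of complex_of_real] by (simp add: of_real_sum cmod_sq_complex')
  have ca: "(\<Sum>i<N. c i * cnj (w i)) = cnj ?a"
    by (simp add: cnj_sum mult.commute)
  have "complex_of_real (\<Sum>i<N. (cmod (w i - \<mu> * c i))\<^sup>2)
      = (\<Sum>i<N. (w i - \<mu> * c i) * cnj (w i - \<mu> * c i))"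
    by (simp add: of_real_sum cmod_sq_complex')
  also have "\<dots> = (\<Sum>i<N. w i * cnj (w i)) - cnj \<mu> * ?a - \<mu> * (\<Sum>i<N. c i * cnj (w i)) + \<mu> * cnj \<mu> * (\<Sum>i<N. c i * cnj (c i))"
    by (simp add: algebra_simps sum.distrib sum_subtractf sum_distrib_left)
  also have "\<dots> = (\<Sum>i<N. w i * cnj (w i)) - ?a * cnj ?a + (\<mu> - ?a) * cnj (\<mu> - ?a)"
    unfolding ca cc by (simp add: algebra_simps)
  also have "\<dots> = complex_of_real ((\<Sum>i<N. (cmod (w i))\<^sup>2) - (cmod ?a)\<^sup>2 + (cmod (\<mu> - ?a))\<^sup>2)"
    by (simp add: of_real_sum cmod_sq_complex')
  finally have "(\<Sum>i<N. (cmod (w i - \<mu> * c i))\<^sup>2) = (\<Sum>i<N. (cmod (w i))\<^sup>2) - (cmod ?a)\<^sup>2 + (cmod (\<mu> - ?a))\<^sup>2"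
    by (simp only: of_real_eq_iff)
  thus ?thesis by simp
qed

lemma channel_ketbra:
  "channel n m p K (ketbra u u) = (\<lambda>x y. \<Sum>j<m. complex_of_real (p j) * ketbra (app n (K j) u) (app n (K j) u) x y)"
  unfolding channel_def by (simp add: mult_ketbra_left mult_ketbra_adj)

lemma per_op_bound:
  fixes b :: "nat \<Rightarrow> qvec" and c :: "nat \<Rightarrow> complex"
  assumes orth: "\<forall>i<N. \<forall>j<N. inner_q n (b i) (b j) = (if i = j then 1 else 0)"
    and bnd: "\<And>i l. i < N \<Longrightarrow> l < N \<Longrightarrow> cmod (inner_q n (b i) (app n F (b l)) - \<mu> * (if i = l then 1 else 0)) \<le> \<eta>"
    and c1: "(\<Sum>i<N. (cmod (c i))\<^sup>2) = 1"
  shows "(\<Sum>i<N. (cmod (inner_q n (b i) (app n F (\<lambda>x. \<Sum>l<N. c l * b l x))))\<^sup>2)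
         - (cmod (\<Sum>i<N. inner_q n (b i) (app n F (\<lambda>x. \<Sum>l<N. c l * b l x)) * cnj (c i)))\<^sup>2
         \<le> real N ^ 3 * \<eta>\<^sup>2"
proof -
  let ?M = "\<lambda>i l. inner_q n (b i) (app n F (b l))"
  let ?w = "\<lambda>i. inner_q n (b i) (app n F (\<lambda>x. \<Sum>l<N. c l * b l x))"
  have w: "?w i = (\<Sum>l<N. c l * ?M i l)" for i
    by (simp add: app_linear inner_sum_right)
  have cle: "cmod (c l) \<le> 1" if "l < N" for l
  proof -
    have "(cmod (c l))\<^sup>2 \<le> (\<Sum>i<N. (cmod (c i))\<^sup>2)"
      using that by (intro member_le_sum) auto
    thus ?thesis using c1 by (simp add: power_le_one_iff abs_le_square_iff)
  qed
  have eta0: "\<eta> \<ge> 0" if "N > 0" using bnd[of 0 0] that by (meson norm_ge_zero order_trans)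
  have "(\<Sum>i<N. (cmod (?w i))\<^sup>2) - (cmod (\<Sum>i<N. ?w i * cnj (c i)))\<^sup>2 \<le> (\<Sum>i<N. (cmod (?w i - \<mu> * c i))\<^sup>2)"
    by (rule proj_ineq[OF c1])
  also have "\<dots> \<le> (\<Sum>i<N. (real N * \<eta>)\<^sup>2)"
  proof (rule sum_mono)
    fix i assume "i \<in> {..<N}"
    hence i: "i < N" by simp
    have "?w i - \<mu> * c i = (\<Sum>l<N. c l * (?M i l - \<mu> * (if i = l then 1 else 0)))"
    proof -
      have "(\<Sum>l<N. c l * (\<mu> * (if i = l then 1 else 0))) = \<mu> * c i"
        using i by (simp add: if_distrib cong: if_cong)
      thus ?thesis unfolding w by (simp add: algebra_simps sum_subtractf)
    qed
    also have "cmod \<dots> \<le> (\<Sum>l<N. cmod (c l * (?M i l - \<mu> * (if i = l then 1 else 0))))"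
      by (rule norm_sum)
    also have "\<dots> \<le> (\<Sum>l<N. 1 * \<eta>)"
    proof (rule sum_mono)
      fix l assume "l \<in> {..<N}"
      hence l: "l < N" by simp
      show "cmod (c l * (?M i l - \<mu> * (if i = l then 1 else 0))) \<le> 1 * \<eta>"
        unfolding norm_mult using cle[OF l] bnd[OF i l] eta0 l
        by (intro mult_mono) auto
    qed
    also have "\<dots> = real N * \<eta>" by simp
    finally have "cmod (?w i - \<mu> * c i) \<le> real N * \<eta>" .
    thus "(cmod (?w i - \<mu> * c i))\<^sup>2 \<le> (real N * \<eta>)\<^sup>2"
      by (intro power_mono) auto
  qed
  also have "\<dots> = real N ^ 3 * \<eta>\<^sup>2" by (simp add: power2_eq_square power3_eq_cube)
  finally show ?thesis .
qed

lemma detect: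
  fixes b :: "nat \<Rightarrow> qvec"
  assumes orth: "\<forall>i<N. \<forall>j<N. inner_q n (b i) (b j) = (if i = j then 1 else 0)"
    and bnd: "\<And>F i l. local_op n d F \<Longrightarrow> op_norm n F \<le> 1 \<Longrightarrow> i < N \<Longrightarrow> l < N \<Longrightarrow>
        cmod (inner_q n (b i) (app n F (b l)) - F {..<n} {..<n} * (if i = l then 1 else 0)) \<le> \<eta>"
    and eta: "real N ^ 3 * \<eta>\<^sup>2 \<le> eps * delta" and delta: "delta > 0"
    and adm: "admissible_noise n d m p K"
    and C: "C = {v. \<exists>c. v = (\<lambda>x. \<Sum>i<N. c i * b i x)}"
  shows "approx_detect n eps delta C (\<lambda>x y. \<Sum>i<N. ketbra (b i) (b i) x y) (channel n m p K)"
  unfolding approx_detect_def Let_def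
proof (rule ballI, rule impI)
  fix \<Phi> assume "\<Phi> \<in> C" and nPhi: "vnorm n \<Phi> = 1"
  then obtain c where Phi: "\<Phi> = (\<lambda>x. \<Sum>i<N. c i * b i x)" using C by blast
  let ?P = "\<lambda>x y. \<Sum>i<N. ketbra (b i) (b i) x y"
  let ?phi = "\<lambda>j. app n (K j) \<Phi>"
  let ?w = "\<lambda>j i. inner_q n (b i) (?phi j)"
  let ?T = "\<lambda>j. \<Sum>i<N. (cmod (?w j i))\<^sup>2"
  let ?a = "\<lambda>j. \<Sum>i<N. ?w j i * cnj (c i)"
  let ?t = "Re (trace_q n (mult_q n ?P (channel n m p K (ketbra \<Phi> \<Phi>))))"
  have bPhi: "inner_q n (b i) \<Phi> = c i" if "i < N" for i
  proof -
    have "inner_q n (b i) \<Phi> = (\<Sum>l<N. c l * inner_q n (b i) (b l))"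
      unfolding Phi by (rule inner_sum_right)
    also have "\<dots> = (\<Sum>l<N. if l = i then c l else 0)"
      using orth that by (intro sum.cong refl) auto
    also have "\<dots> = c i" using that by simp
    finally show ?thesis .
  qed
  have Phib: "inner_q n \<Phi> (b i) = cnj (c i)" if "i < N" for i
    using bPhi[OF that] inner_conj[of n \<Phi> "b i"] by simp
  have c1: "(\<Sum>i<N. (cmod (c i))\<^sup>2) = 1"
  proof -
    have "inner_q n \<Phi> \<Phi> = 1" using nPhi by (simp add: inner_self vnorm_sq[symmetric])
    moreover have "inner_q n \<Phi> \<Phi> = (\<Sum>i<N. cnj (c i) * inner_q n (b i) \<Phi>)"
      by (subst (1) Phi) (rule inner_sum_left)
    moreover have "\<dots> = (\<Sum>i<N. complex_of_real ((cmod (c i))\<^sup>2))"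
      by (intro sum.cong refl) (simp add: bPhi cmod_sq_complex' mult.commute)
    ultimately have "complex_of_real (\<Sum>i<N. (cmod (c i))\<^sup>2) = 1" by (simp add: of_real_sum)
    thus ?thesis by (metis of_real_eq_1_iff)
  qed
  have Pphi: "app n ?P (?phi j) = (\<lambda>x. \<Sum>i<N. ?w j i * b i x)" for j
    by (rule app_P)
  have innPP: "inner_q n (?phi j) (app n ?P (?phi j)) = complex_of_real (?T j)" for j
  proof -
    have "inner_q n (?phi j) (app n ?P (?phi j)) = (\<Sum>i<N. ?w j i * inner_q n (?phi j) (b i))"
      unfolding Pphi by (rule inner_sum_right)
    also have "\<dots> = (\<Sum>i<N. complex_of_real ((cmod (?w j i))\<^sup>2))"
      by (intro sum.cong refl) (simp add: cmod_sq_complex' inner_conj[of n "?phi j"])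
    finally show ?thesis by (simp add: of_real_sum)
  qed
  have NP: "channel n m p K (ketbra \<Phi> \<Phi>) = (\<lambda>x y. \<Sum>j<m. complex_of_real (p j) * ketbra (?phi j) (?phi j) x y)"
    by (rule channel_ketbra)
  have tr: "trace_q n (mult_q n ?P (channel n m p K (ketbra \<Phi> \<Phi>))) = complex_of_real (\<Sum>j<m. p j * ?T j)"
    unfolding NP mult_sum_right trace_sum mult_ketbra_left trace_ketbra innPP
    by (simp add: of_real_sum)
  hence t_eq: "?t = (\<Sum>j<m. p j * ?T j)" by simp
  have PNP: "mult_q n (mult_q n ?P (channel n m p K (ketbra \<Phi> \<Phi>))) ?P
      = (\<lambda>x y. \<Sum>j<m. complex_of_real (p j) * ketbra (app n ?P (?phi j)) (app n ?P (?phi j)) x y)"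
    unfolding NP mult_sum_right mult_ketbra_left mult_sum_left mult_ketbra_right adj_P ..
  have innPhiP: "inner_q n \<Phi> (app n ?P (?phi j)) = ?a j" for j
  proof -
    have "inner_q n \<Phi> (app n ?P (?phi j)) = (\<Sum>i<N. ?w j i * inner_q n \<Phi> (b i))"
      unfolding Pphi by (rule inner_sum_right)
    also have "\<dots> = ?a j" by (intro sum.cong refl) (simp add: Phib)
    finally show ?thesis .
  qed
  have fid: "inner_q n \<Phi> (app n (\<lambda>x y. mult_q n (mult_q n ?P (channel n m p K (ketbra \<Phi> \<Phi>))) ?P x y / complex_of_real ?t) \<Phi>)
     = complex_of_real (\<Sum>j<m. p j * (cmod (?a j))\<^sup>2) / complex_of_real ?t"
  proof -
    have "app n (\<lambda>x y. \<Sum>j<m. complex_of_real (p j) * ketbra (app n ?P (?phi j)) (app n ?P (?phi j)) x y) \<Phi>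
        = (\<lambda>x. \<Sum>j<m. complex_of_real (p j) * app n (ketbra (app n ?P (?phi j)) (app n ?P (?phi j))) \<Phi> x)"
      by (rule app_sum_op)
    also have "\<dots> = (\<lambda>x. \<Sum>j<m. (complex_of_real (p j) * cnj (?a j)) * app n ?P (?phi j) x)"
    proof (intro ext sum.cong refl)
      fix x j
      have "inner_q n (app n ?P (?phi j)) \<Phi> = cnj (?a j)"
        using innPhiP[of j] inner_conj[of n "app n ?P (?phi j)" \<Phi>] by simp
      thus "complex_of_real (p j) * app n (ketbra (app n ?P (?phi j)) (app n ?P (?phi j))) \<Phi> x
          = (complex_of_real (p j) * cnj (?a j)) * app n ?P (?phi j) x"
        by (simp add: app_ketbra)
    qed
    finally have A: "app n (\<lambda>x y. \<Sum>j<m. complex_of_real (p j) * ketbra (app n ?P (?phi j)) (app n ?P (?phi j)) x y) \<Phi>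
        = (\<lambda>x. \<Sum>j<m. (complex_of_real (p j) * cnj (?a j)) * app n ?P (?phi j) x)" .
    have "inner_q n \<Phi> (\<lambda>x. \<Sum>j<m. (complex_of_real (p j) * cnj (?a j)) * app n ?P (?phi j) x)
        = (\<Sum>j<m. (complex_of_real (p j) * cnj (?a j)) * inner_q n \<Phi> (app n ?P (?phi j)))"
      by (rule inner_sum_right)
    also have "\<dots> = complex_of_real (\<Sum>j<m. p j * (cmod (?a j))\<^sup>2)"
      unfolding innPhiP of_real_sum
      by (intro sum.cong refl) (simp add: cmod_sq_complex' mult_ac)
    finally have B: "inner_q n \<Phi> (\<lambda>x. \<Sum>j<m. (complex_of_real (p j) * cnj (?a j)) * app n ?P (?phi j) x)
        = complex_of_real (\<Sum>j<m. p j * (cmod (?a j))\<^sup>2)" .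
    show ?thesis
      unfolding app_div inner_div_right PNP A B ..
  qed
  show "delta \<le> ?t \<longrightarrow> 1 - eps \<le> Re (inner_q n \<Phi> (app n (\<lambda>x y. mult_q n (mult_q n ?P (channel n m p K (ketbra \<Phi> \<Phi>))) ?P x y / complex_of_real ?t) \<Phi>))"
  proof
    assume dt: "delta \<le> ?t"
    have tpos: "?t > 0" using dt delta by linarith
    have pj: "\<forall>j<m. p j \<ge> 0" "(\<Sum>j<m. p j) = 1"
      and Kj: "\<forall>j<m. local_op n d (K j) \<and> op_norm n (K j) \<le> 1"
      using adm unfolding admissible_noise_def by auto
    have per: "?T j - (cmod (?a j))\<^sup>2 \<le> real N ^ 3 * \<eta>\<^sup>2" if "j < m" for j
    proof -
      have lj: "local_op n d (K j)" and oj: "op_norm n (K j) \<le> 1" using Kj that by auto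
      have bj: "cmod (inner_q n (b i) (app n (K j) (b l)) - K j {..<n} {..<n} * (if i = l then 1 else 0)) \<le> \<eta>"
        if "i < N" "l < N" for i l
        by (rule bnd[OF lj oj that])
      show ?thesis unfolding Phi by (rule per_op_bound[OF orth bj c1])
    qed
    have "(\<Sum>j<m. p j * ?T j) - (\<Sum>j<m. p j * (cmod (?a j))\<^sup>2) = (\<Sum>j<m. p j * (?T j - (cmod (?a j))\<^sup>2))"
      by (simp add: sum_subtractf algebra_simps)
    also have "\<dots> \<le> (\<Sum>j<m. p j * (real N ^ 3 * \<eta>\<^sup>2))"
      using pj per by (intro sum_mono mult_left_mono) auto
    also have "\<dots> = real N ^ 3 * \<eta>\<^sup>2" using pj by (simp add: sum_distrib_right[symmetric])
    also have "\<dots> \<le> eps * delta" by (rule eta)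
    also have "\<dots> \<le> eps * ?t"
    proof -
      have "eps * delta \<ge> 0" using eta by (metis order_trans zero_le_power2 mult_nonneg_nonneg of_nat_0_le_iff zero_le_power)
      hence "eps \<ge> 0" using delta by (simp add: zero_le_mult_iff)
      thus ?thesis using dt by (intro mult_left_mono) auto
    qed
    finally have "(\<Sum>j<m. p j * (cmod (?a j))\<^sup>2) \<ge> (1 - eps) * ?t"
      unfolding t_eq by (simp add: algebra_simps)
    hence "(\<Sum>j<m. p j * (cmod (?a j))\<^sup>2) / ?t \<ge> 1 - eps"
      using tpos by (simp add: pos_le_divide_eq)
    moreover have "Re (complex_of_real (\<Sum>j<m. p j * (cmod (?a j))\<^sup>2) / complex_of_real ?t) = (\<Sum>j<m. p j * (cmod (?a j))\<^sup>2) / ?t"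
      by (simp only: of_real_divide[symmetric] Re_complex_of_real)
    ultimately show "1 - eps \<le> Re (inner_q n \<Phi> (app n (\<lambda>x y. mult_q n (mult_q n ?P (channel n m p K (ketbra \<Phi> \<Phi>))) ?P x y / complex_of_real ?t) \<Phi>))"
      unfolding fid by simp
  qed
qed


lemma choose_le2:
  assumes n: "n \<ge> 2" and r: "2 * r + 1 \<le> n"
  shows "(n - 1) choose r \<le> 2 * ((n - 2) choose r)"
proof -
  have h: "(n - 1 - r) * ((n - 1) choose r) = (n - 1) * ((n - 2) choose r)"
    using binomial_absorb_comp[of "n - 1" r] by (simp add: diff_diff_add numeral_2_eq_2)
  have "(n - 1) * ((n - 1) choose r) \<le> (2 * (n - 1 - r)) * ((n - 1) choose r)"
    using r by (intro mult_right_mono) auto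
  also have "\<dots> = (n - 1) * (2 * ((n - 2) choose r))" using h by simp
  finally show ?thesis using n by simp
qed

lemma inner_amp_amp:
  "inner_q n (amp n r) (amp n s) = (if r = s then complex_of_real (nsq n (amp n r)) else 0)"
proof (cases "r = s")
  case True thus ?thesis by (simp add: inner_self)
next
  case False
  have z: "\<forall>x. cnj (amp n r x) * amp n s x = 0"
    using amp_supp[of n r] amp_supp[of n s] False by fastforce
  have "inner_q n (amp n r) (amp n s) = 0"
    unfolding inner_q_def by (rule sum.neutral) (use z in blast)
  thus ?thesis using False by simp
qed

lemma cutv_scale: "cutv S (\<lambda>x. c * u x) = (\<lambda>x. c * cutv S u x)"
  by (auto simp: cutv_def)

lemma code_n:
  fixes n N d k :: nat and eps delta :: real
  assumes n2: "n \<ge> 2" and N4: "4 * N \<le> n" and Nk: "N = 2 ^ k"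
    and eta: "real N ^ 3 * (2 * sqrt (8 * real d * (real N)\<^sup>2 / real n) + (sqrt (8 * real d * (real N)\<^sup>2 / real n))\<^sup>2)\<^sup>2 \<le> eps * delta"
    and delta: "delta > 0"
  shows "\<exists>R C. R \<subseteq> {0..n - 2} \<and> (\<forall>r\<in>R. \<forall>s\<in>R. r \<noteq> s \<longrightarrow> r + 2 \<le> s \<or> s + 2 \<le> r) \<and>
           C = desc_span n R \<and> AQEDC n eps delta k d C"
proof -
  have Npos: "N \<ge> 1" using Nk by simp
  define D where "D r = nsq n (amp n r)" for r
  define s where "s r = sqrt (D r)" for r
  define b where "b i = (\<lambda>x. complex_of_real (1 / s (2 * i)) * amp n (2 * i) x)" for i
  define e where "e = sqrt (8 * real d * (real N)\<^sup>2 / real n)"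
  have rr: "2 * i + 2 \<le> n" if "i < N" for i using that N4 by linarith
  have Dpos: "D r > 0" if "r + 2 \<le> n" for r
  proof -
    have "(n - 2) choose r > 0" using that by (intro zero_less_binomial) linarith
    thus ?thesis unfolding D_def using nsq_amp[OF n2 that] n2 by simp
  qed
  have spos: "s r > 0" if "r + 2 \<le> n" for r using Dpos[OF that] by (simp add: s_def)
  have ssq: "(s r)\<^sup>2 = D r" if "r + 2 \<le> n" for r using Dpos[OF that] by (simp add: s_def)
  have orth: "\<forall>i<N. \<forall>j<N. inner_q n (b i) (b j) = (if i = j then 1 else 0)"
  proof (intro allI impI)
    fix i j assume i: "i < N" and j: "j < N"
    show "inner_q n (b i) (b j) = (if i = j then 1 else 0)"
    proof (cases "i = j")
      case True
      have "inner_q n (b i) (b i) = complex_of_real ((1 / s (2 * i)) * (1 / s (2 * i)) * D (2 * i))"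
        unfolding b_def inner_scale_left inner_scale_right inner_amp_amp D_def by simp
      also have "(1 / s (2 * i)) * (1 / s (2 * i)) * D (2 * i) = 1"
        using ssq[OF rr[OF i]] spos[OF rr[OF i]] Dpos[OF rr[OF i]] by (simp add: power2_eq_square field_simps)
      finally show ?thesis using True by simp
    next
      case False
      thus ?thesis unfolding b_def inner_scale_left inner_scale_right inner_amp_amp by simp
    qed
  qed
  have bout: "\<forall>i<2 ^ k. \<forall>x. x \<notin> cfg n \<longrightarrow> b i x = 0"
    by (simp add: b_def amp_out)
  have bnorm: "vnorm n (b i) \<le> 1" if "i < N" for i
  proof -
    have "nsq n (b i) = (1 / s (2 * i))\<^sup>2 * D (2 * i)"
      unfolding b_def nsq_scale D_def using spos[OF rr[OF that]] by (simp add: norm_divide)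
    also have "\<dots> = 1" using ssq[OF rr[OF that]] spos[OF rr[OF that]] Dpos[OF rr[OF that]] by (simp add: field_simps)
    finally show ?thesis by (simp add: vnorm_nsq)
  qed
  have bcut: "vnorm n (cutv S (b i)) \<le> e" if i: "i < N" and S: "S \<subseteq> {..<n}" "card S = d" for i S
  proof -
    let ?r = "2 * i"
    have r2: "2 * ?r + 1 \<le> n" using i N4 by linarith
    have r1: "real (?r + 1) \<le> 2 * real N" using i by simp
    have Cpos: "real ((n - 2) choose ?r) > 0" using rr[OF i] by (simp add: zero_less_binomial)
    have fpos: "fact ?r > (0::real)" by simp
    have "nsq n (cutv S (b i)) = (1 / s ?r)\<^sup>2 * nsq n (cutv S (amp n ?r))"
      unfolding b_def cutv_scale nsq_scale using spos[OF rr[OF i]] by (simp add: norm_divide)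
    also have "\<dots> \<le> (1 / s ?r)\<^sup>2 * (real d * ((fact ?r * real (?r + 1))\<^sup>2 * real ((n - 1) choose ?r)))"
      by (intro mult_left_mono nsq_cut_amp S) simp
    also have "\<dots> = real d * (real (?r + 1))\<^sup>2 * real ((n - 1) choose ?r) / (real n * real ((n - 2) choose ?r))"
      using ssq[OF rr[OF i]] spos[OF rr[OF i]] fpos Cpos n2
      unfolding D_def nsq_amp[OF n2 rr[OF i]]
      by (simp add: field_simps power2_eq_square)
    also have "\<dots> \<le> real d * (real (?r + 1))\<^sup>2 * (2 * real ((n - 2) choose ?r)) / (real n * real ((n - 2) choose ?r))"
    proof -
      have "real ((n - 1) choose ?r) \<le> 2 * real ((n - 2) choose ?r)"
        using choose_le2[OF n2 r2] by linarith
      thus ?thesis using n2 Cpos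
        by (intro divide_right_mono mult_left_mono) auto
    qed
    also have "\<dots> = 2 * real d * (real (?r + 1))\<^sup>2 / real n"
      using Cpos by (simp add: field_simps)
    also have "\<dots> \<le> 2 * real d * (2 * real N)\<^sup>2 / real n"
      using r1 n2 by (intro divide_right_mono mult_left_mono power_mono) auto
    also have "\<dots> = 8 * real d * (real N)\<^sup>2 / real n" by (simp add: power2_eq_square)
    finally show ?thesis unfolding vnorm_nsq e_def by (rule real_sqrt_le_mono)
  qed
  have bnd: "cmod (inner_q n (b i) (app n F (b l)) - F {..<n} {..<n} * (if i = l then 1 else 0)) \<le> 2 * e + e\<^sup>2"
    if "local_op n d F" "op_norm n F \<le> 1" "i < N" "l < N" for F i l
  proof -
    have "cmod (inner_q n (b i) (app n F (b l)) - F {..<n} {..<n} * inner_q n (b i) (b l)) \<le> 2 * e + e\<^sup>2"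
      by (rule core[OF that(1,2) bnorm[OF that(3)] bnorm[OF that(4)]]) (use bcut that in auto)
    thus ?thesis using orth that by simp
  qed
  define R where "R = (\<lambda>i. 2 * i) ` {..<N}"
  define C where "C = {v. \<exists>c. v = (\<lambda>x. \<Sum>i<N. c i * b i x)}"
  have Rsub: "R \<subseteq> {0..n - 2}" unfolding R_def using N4 by auto
  have Rsep: "\<forall>r\<in>R. \<forall>s\<in>R. r \<noteq> s \<longrightarrow> r + 2 \<le> s \<or> s + 2 \<le> r" unfolding R_def by auto
  have sumR: "(\<Sum>r\<in>R. c r * descendant n r x) = (\<Sum>i<N. c (2 * i) * amp n (2 * i) x)" for c x
    unfolding R_def desc_amp by (subst sum.reindex) (auto simp: inj_on_def)
  have CR: "C = desc_span n R"
  proof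
    show "C \<subseteq> desc_span n R"
    proof
      fix v assume "v \<in> C"
      then obtain c where v: "v = (\<lambda>x. \<Sum>i<N. c i * b i x)" unfolding C_def by blast
      let ?c = "\<lambda>r. c (r div 2) * complex_of_real (1 / s r)"
      have "v = (\<lambda>x. \<Sum>r\<in>R. ?c r * descendant n r x)"
        unfolding sumR v b_def by (simp add: mult.assoc)
      thus "v \<in> desc_span n R" unfolding desc_span_def by (intro CollectI exI[of _ ?c]) simp
    qed
  next
    show "desc_span n R \<subseteq> C"
    proof
      fix v assume "v \<in> desc_span n R"
      then obtain c where v: "v = (\<lambda>x. \<Sum>r\<in>R. c r * descendant n r x)" unfolding desc_span_def by blast
      let ?c = "\<lambda>i. c (2 * i) * complex_of_real (s (2 * i))"
      have "v = (\<lambda>x. \<Sum>i<N. ?c i * b i x)"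
      proof
        fix x
        have "c (2 * i) * amp n (2 * i) x = ?c i * b i x" if "i \<in> {..<N}" for i
          using spos[OF rr, of i] that by (simp add: b_def field_simps)
        thus "v x = (\<Sum>i<N. ?c i * b i x)" unfolding v sumR by (intro sum.cong refl) auto
      qed
      thus "v \<in> C" unfolding C_def by (intro CollectI exI[of _ ?c]) simp
    qed
  qed
  have "AQEDC n eps delta k d C"
    unfolding AQEDC_def Let_def
  proof (rule exI[of _ b], intro conjI)
    show "\<forall>i<2 ^ k. \<forall>x. x \<notin> cfg n \<longrightarrow> b i x = 0" by (rule bout)
    show "\<forall>i<2 ^ k. \<forall>j<2 ^ k. inner_q n (b i) (b j) = (if i = j then 1 else 0)" using orth Nk by simp
    show "C = {v. \<exists>c. v = (\<lambda>x. \<Sum>i<2 ^ k. c i * b i x)}" using C_def Nk by simp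
    show "\<forall>m p K. admissible_noise n d m p K \<longrightarrow> approx_detect n eps delta C (\<lambda>x y. \<Sum>i<2 ^ k. ketbra (b i) (b i) x y) (channel n m p K)"
    proof (intro allI impI)
      fix m p K assume adm: "admissible_noise n d m p K"
      show "approx_detect n eps delta C (\<lambda>x y. \<Sum>i<2 ^ k. ketbra (b i) (b i) x y) (channel n m p K)"
        unfolding Nk[symmetric]
        by (rule detect[OF orth bnd _ delta adm C_def]) (use eta e_def in simp_all)
    qed
  qed
  thus ?thesis using Rsub Rsep CR by blast
qed


lemma pointwise:
  fixes nu kappa lam :: real and n :: nat
  assumes n2: "n \<ge> 2" and kp: "kappa > 0" and nu: "nu < 1" and lp: "lam > 0"
    and ha: "8 * real n powr (2 * kappa - nu) \<le> 1"
    and hb: "4 * real n powr kappa \<le> real n"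
  shows "\<exists>R C. R \<subseteq> {0..n - 2} \<and> (\<forall>r\<in>R. \<forall>s\<in>R. r \<noteq> s \<longrightarrow> r + 2 \<le> s \<or> s + 2 \<le> r) \<and>
           C = desc_span n R \<and>
           AQEDC n (72 * real n powr (- (nu - (6 * kappa + lam)))) (real n powr (- lam))
                 (nat \<lfloor>kappa * log 2 (real n)\<rfloor>) (nat \<lfloor>real n powr (1 - nu)\<rfloor>) C"
proof -
  define k where "k = nat \<lfloor>kappa * log 2 (real n)\<rfloor>"
  define d where "d = nat \<lfloor>real n powr (1 - nu)\<rfloor>"
  define N :: nat where "N = 2 ^ k"
  define X where "X = real n powr kappa"
  define Y where "Y = real n powr (1 - nu)"
  have npos: "real n > 0" using n2 by simp
  have n1: "real n \<ge> 1" using n2 by simp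
  have lg: "log 2 (real n) \<ge> 0" using n1 by simp
  have kreal: "real k = real_of_int \<lfloor>kappa * log 2 (real n)\<rfloor>"
    unfolding k_def using kp lg by simp
  have hN: "real N \<le> X"
  proof -
    have "real N = 2 powr real k" unfolding N_def by (simp add: powr_realpow)
    also have "\<dots> \<le> 2 powr (kappa * log 2 (real n))"
      unfolding kreal by (intro powr_mono) auto
    also have "\<dots> = (2 powr log 2 (real n)) powr kappa"
      by (simp add: powr_powr mult.commute)
    also have "\<dots> = X" unfolding X_def using npos by simp
    finally show ?thesis .
  qed
  have hd: "real d \<le> Y"
    unfolding d_def Y_def by simp
  have N0: "real N \<ge> 0" by simp
  have X0: "X \<ge> 0" and Y0: "Y \<ge> 0" unfolding X_def Y_def by simp_all
  have N4: "4 * N \<le> n"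
  proof -
    have "4 * real N \<le> real n" using hN hb X_def by linarith
    thus ?thesis by linarith
  qed
  define e where "e = sqrt (8 * real d * (real N)\<^sup>2 / real n)"
  have e0: "e \<ge> 0" unfolding e_def using npos by simp
  have esq: "e\<^sup>2 = 8 * real d * (real N)\<^sup>2 / real n" unfolding e_def using npos by simp
  have XX: "X ^ 2 = real n powr (2 * kappa)" unfolding X_def using npos by (simp add: powr_power)
  have X5: "X ^ 5 = real n powr (5 * kappa)" unfolding X_def using npos by (simp add: powr_power)
  have e1: "e\<^sup>2 \<le> 1"
  proof -
    have "e\<^sup>2 \<le> 8 * Y * X ^ 2 / real n"
      unfolding esq using npos hd hN N0 Y0
      by (intro divide_right_mono mult_mono mult_left_mono power_mono) auto
    also have "\<dots> = 8 * real n powr (2 * kappa - nu)"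
      unfolding XX Y_def using npos by (simp add: powr_add[symmetric] powr_diff)
    finally show ?thesis using ha by simp
  qed
  have ele: "e \<le> 1" using e1 e0 by (simp add: power_le_one_iff abs_le_square_iff)
  have eta: "(2 * e + e\<^sup>2)\<^sup>2 \<le> 9 * e\<^sup>2"
  proof -
    have "e\<^sup>2 \<le> e" using ele e0 by (simp add: power2_eq_square mult_left_le)
    hence "2 * e + e\<^sup>2 \<le> 3 * e" by simp
    moreover have "0 \<le> 2 * e + e\<^sup>2" using e0 by simp
    ultimately have "(2 * e + e\<^sup>2)\<^sup>2 \<le> (3 * e)\<^sup>2" by (intro power_mono)
    thus ?thesis by (simp add: power2_eq_square)
  qed
  have main: "real N ^ 3 * (2 * e + e\<^sup>2)\<^sup>2 \<le> 72 * real n powr (- (nu - (6 * kappa + lam))) * real n powr (- lam)"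
  proof -
    have "real N ^ 3 * (2 * e + e\<^sup>2)\<^sup>2 \<le> real N ^ 3 * (9 * e\<^sup>2)"
      using eta by (intro mult_left_mono) auto
    also have "\<dots> = 72 * real d * real N ^ 5 / real n"
    proof -
      have "real N ^ 5 = real N ^ 3 * (real N)\<^sup>2" by (simp add: power_add[symmetric])
      thus ?thesis unfolding esq by (simp add: field_simps)
    qed
    also have "\<dots> \<le> 72 * Y * X ^ 5 / real n"
      using npos hd hN N0 Y0
      by (intro divide_right_mono mult_mono mult_left_mono power_mono) auto
    also have "\<dots> = 72 * real n powr (5 * kappa - nu)"
      unfolding X5 Y_def using npos by (simp add: powr_add[symmetric] powr_diff)
    also have "\<dots> \<le> 72 * real n powr (6 * kappa - nu)"
      using kp n1 by (intro mult_left_mono powr_mono) auto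
    also have "\<dots> = 72 * real n powr (- (nu - (6 * kappa + lam))) * real n powr (- lam)"
      using npos by (simp add: powr_add[symmetric] algebra_simps)
    finally show ?thesis .
  qed
  have dpos: "real n powr (- lam) > 0" using npos by simp
  show ?thesis
    using code_n[OF n2 N4 N_def main[unfolded e_def] dpos] unfolding k_def d_def .
qed

theorem theorem8:
  fixes nu kappa lam :: real
  assumes "0 < nu" "nu < 1" "kappa > 0" "lam > 0" "6 * kappa + lam < nu"
  shows "\<exists>eps :: nat \<Rightarrow> real.
           eps \<in> \<Theta>(\<lambda>n. real n powr (- (nu - (6 * kappa + lam)))) \<and>
           (\<forall>\<^sub>F n in sequentially. \<exists>R C.
              R \<subseteq> {0..n - 2} \<and>
              (\<forall>r\<in>R. \<forall>s\<in>R. r \<noteq> s \<longrightarrow> r + 2 \<le> s \<or> s + 2 \<le> r) \<and>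
              C = desc_span n R \<and>
              AQEDC n (eps n) (real n powr (- lam))
                    (nat \<lfloor>kappa * log 2 (real n)\<rfloor>) (nat \<lfloor>real n powr (1 - nu)\<rfloor>) C)"
proof -
  define eps where "eps = (\<lambda>n::nat. 72 * real n powr (- (nu - (6 * kappa + lam))))"
  have th: "eps \<in> \<Theta>(\<lambda>n. real n powr (- (nu - (6 * kappa + lam))))"
    unfolding eps_def by simp
  have a0: "2 * kappa - nu < 0" using assms by linarith
  have b0: "kappa - 1 < 0" using assms by linarith
  have l1: "((\<lambda>n::nat. real n powr (2 * kappa - nu)) \<longlongrightarrow> 0) sequentially"
    by (rule tendsto_neg_powr[OF a0 filterlim_real_sequentially])
  have l2: "((\<lambda>n::nat. real n powr (kappa - 1)) \<longlongrightarrow> 0) sequentially"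
    by (rule tendsto_neg_powr[OF b0 filterlim_real_sequentially])
  have ev1: "\<forall>\<^sub>F n in sequentially. real n powr (2 * kappa - nu) < 1 / 8"
    by (rule order_tendstoD(2)[OF l1]) simp
  have ev2: "\<forall>\<^sub>F n in sequentially. real n powr (kappa - 1) < 1 / 4"
    by (rule order_tendstoD(2)[OF l2]) simp
  have ev3: "\<forall>\<^sub>F n in sequentially. n \<ge> (2::nat)"
    by (rule eventually_ge_at_top)
  have "\<forall>\<^sub>F n in sequentially. \<exists>R C.
              R \<subseteq> {0..n - 2} \<and>
              (\<forall>r\<in>R. \<forall>s\<in>R. r \<noteq> s \<longrightarrow> r + 2 \<le> s \<or> s + 2 \<le> r) \<and>
              C = desc_span n R \<and>
              AQEDC n (eps n) (real n powr (- lam))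
                    (nat \<lfloor>kappa * log 2 (real n)\<rfloor>) (nat \<lfloor>real n powr (1 - nu)\<rfloor>) C"
    using ev1 ev2 ev3
  proof eventually_elim
    case (elim n)
    have npos: "real n > 0" using elim(3) by simp
    have ha: "8 * real n powr (2 * kappa - nu) \<le> 1" using elim(1) by simp
    have "real n powr kappa = real n powr (kappa - 1) * real n"
      using npos by (simp add: powr_diff)
    hence hb: "4 * real n powr kappa \<le> real n" using elim(2) npos
      by (simp add: mult_right_mono)
    show ?case unfolding eps_def
      by (rule pointwise[OF elim(3) assms(3) assms(2) assms(4) ha hb])
  qed
  thus ?thesis using th by blast
qed


end
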